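(* Let $G\subset \mathrm{GL}_n(\mathbb{C})$ be a complex reflection group, let $L=\mathbb{C}(x_1,\dots,x_n)$ with the action of $G$ described in the context, and let $\boldsymbol{\phi}=(\phi_1,\dots,\phi_n)$ be an $n$-tuple of fundamental invariants of $G$. Put $K=\mathbb{C}(z_1,\dots,z_n)$ with $z_i=\phi_i(\mathbf{x})$, so $K=L^G\subseteq L$, and let $\delta_i$ ($1\le i\le n$) denote the unique derivation of $L$ extending $\partial/\partial z_i$ on $K$. Let $J_{\boldsymbol{\phi}}=\bigl(\partial\phi_i/\partial x_j\bigr)_{1\le i,j\le n}$ be the Jacobian matrix, and define $A_i:=\delta_i(J_{\boldsymbol{\phi}})\,J_{\boldsymbol{\phi}}^{-1}\in\mathfrak{gl}_n(L)$ for $1\le i\le n$, where $\delta_i$ is applied entrywise. Then: (1) $A_i\in\mathfrak{gl}_n(K)$ for each $1\le i\le n$; (2) $\delta_i(A_j)-\delta_j(A_i)=A_iA_j-A_jA_i$ for all $1\le i,j\le n$; and (3) $L$ is a Picard-Vessiot extension of $K$ for the linear differential system $\{\delta_i(\mathbf{y})=A_i\mathbf{y}\mid 1\le i\le n\}$.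
   Context: A complex reflection is a matrix $M\in\mathrm{GL}_n(\mathbb{C})$ of finite order that fixes pointwise some hyperplane (codimension-one subspace); a complex reflection group is a finite subgroup of $\mathrm{GL}_n(\mathbb{C})$ generated by complex reflections. Such $G$ acts on $S=\mathbb{C}[x_1,\dots,x_n]$ and on $L=\mathbb{C}(x_1,\dots,x_n)$ by $\gamma_M(f)(\mathbf{x})=f(\mathbf{x}\cdot M^{-\top})$, where $\mathbf{x}=(x_1,\dots,x_n)$ is a row vector. A set of fundamental invariants is a tuple $\phi_1,\dots,\phi_n$ of homogeneous, algebraically independent $G$-invariant polynomials with $S^G=\mathbb{C}[\phi_1,\dots,\phi_n]$ (these exist for complex reflection groups), and then $L^G=\mathbb{C}(\phi_1,\dots,\phi_n)$, with $L/K$ a finite Galois extension, so each derivation $\partial/\partial z_i$ of $K$ extends uniquely to a derivation $\delta_i$ of $L$, and these pairwise commute. For a field $F$ with commuting derivations $\delta_1,\dots,\delta_n$, its constants are $C_F=\{c\in F\mid \delta_i(c)=0\ \forall i\}$. Given an integrable system $\{\delta_i(\mathbf{y})=A_i\mathbf{y}\}$ with $A_i\in\mathfrak{gl}_N(K)$, a differential field extension $L\supseteq K$ is a Picard-Vessiot extension for it if $C_L=C_K$ and $L$ is generated as a field over $K$ by the entries of some $U\in\mathrm{GL}_N(L)$ with $\delta_i(U)=A_iU$ for all $i$. *)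

theory Defs
  imports "HOL-Analysis.Analysis" "HOL-Library.Poly_Mapping"
          "HOL-Computational_Algebra.Fraction_Field"
begin

text \<open>S = C[x_i | i :: 'n] (the index type 'n has CARD('n) = n elements);
  L = C(x_i | i :: 'n) is its fraction field.\<close>

type_synonym 'n mpoly = "('n \<Rightarrow>\<^sub>0 nat) \<Rightarrow>\<^sub>0 complex"
type_synonym 'n ratf = "'n mpoly fract"

definition mp_const :: "complex \<Rightarrow> 'n mpoly" where
  "mp_const c = Poly_Mapping.single 0 c"

definition mp_var :: "'n \<Rightarrow> 'n mpoly" where
  "mp_var i = Poly_Mapping.single (Poly_Mapping.single i 1) 1"

definition mp_subst :: "('n::finite \<Rightarrow> 'm mpoly) \<Rightarrow> 'n mpoly \<Rightarrow> 'm mpoly" where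
  "mp_subst s p = (\<Sum>m\<in>Poly_Mapping.keys p. mp_const (Poly_Mapping.lookup p m) * (\<Prod>i\<in>UNIV. s i ^ Poly_Mapping.lookup (m::'n \<Rightarrow>\<^sub>0 nat) i))"

definition mp_pderiv :: "'n \<Rightarrow> 'n mpoly \<Rightarrow> 'n mpoly" where
  "mp_pderiv j p = (\<Sum>m\<in>Poly_Mapping.keys p.
      Poly_Mapping.single (m - Poly_Mapping.single j 1) (of_nat (Poly_Mapping.lookup m j) * Poly_Mapping.lookup p m))"

definition mp_homogeneous :: "'n::finite mpoly \<Rightarrow> bool" where
  "mp_homogeneous p \<longleftrightarrow> (\<exists>d. \<forall>m\<in>Poly_Mapping.keys p. (\<Sum>i\<in>UNIV. Poly_Mapping.lookup (m::'n \<Rightarrow>\<^sub>0 nat) i) = d)"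

definition to_ratf :: "'n::{finite,linorder} mpoly \<Rightarrow> 'n ratf" where
  "to_ratf p = Fract p 1"

text \<open>Matrix powers are written via iterated matrix product (** ), since ^ on vec is componentwise.\<close>
definition complex_reflection :: "complex^'n^'n \<Rightarrow> bool" where
  "complex_reflection M \<longleftrightarrow> invertible M \<and> (\<exists>k>0. ((\<lambda>X. M ** X) ^^ k) (mat 1) = mat 1) \<and>
     (\<exists>H. subspace H \<and> dim H = CARD('n) - 1 \<and> (\<forall>v\<in>H. M *v v = v))"

inductive_set generated_group :: "(complex^'n^'n) set \<Rightarrow> (complex^'n^'n) set"
  for R where
  gen_one: "mat 1 \<in> generated_group R"
| gen_mult: "r \<in> R \<Longrightarrow> g \<in> generated_group R \<Longrightarrow> r ** g \<in> generated_group R"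
| gen_inv: "r \<in> R \<Longrightarrow> g \<in> generated_group R \<Longrightarrow> matrix_inv r ** g \<in> generated_group R"

definition complex_reflection_group :: "(complex^'n^'n) set \<Rightarrow> bool" where
  "complex_reflection_group G \<longleftrightarrow> finite G \<and> (\<forall>M\<in>G. invertible M) \<and>
     G = generated_group {M\<in>G. complex_reflection M}"

text \<open>gamma_M(f)(x) = f(x M^{-T}) for the row vector x, i.e. the substitution
  x_j := sum_k (M^{-1})_{jk} x_k.\<close>
definition gamma :: "complex^'n^'n \<Rightarrow> 'n::finite mpoly \<Rightarrow> 'n mpoly" where
  "gamma M f = mp_subst (\<lambda>j. \<Sum>k\<in>UNIV. mp_const (matrix_inv M $ j $ k) * mp_var k) f"

definition invariant_ring :: "(complex^'n^'n) set \<Rightarrow> 'n::finite mpoly set" where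
  "invariant_ring G = {f. \<forall>M\<in>G. gamma M f = f}"

definition fundamental_invariants :: "(complex^'n^'n) set \<Rightarrow> ('n::finite \<Rightarrow> 'n mpoly) \<Rightarrow> bool" where
  "fundamental_invariants G \<phi> \<longleftrightarrow>
     (\<forall>i. mp_homogeneous (\<phi> i)) \<and>
     (\<forall>f::'n mpoly. mp_subst \<phi> f = 0 \<longrightarrow> f = 0) \<and>
     (\<forall>i. \<phi> i \<in> invariant_ring G) \<and>
     invariant_ring G = range (\<lambda>f. mp_subst \<phi> f)"

definition is_subfield :: "'a::field set \<Rightarrow> bool" where
  "is_subfield F \<longleftrightarrow> 0 \<in> F \<and> 1 \<in> F \<and> (\<forall>a\<in>F. \<forall>b\<in>F. a + b \<in> F \<and> a * b \<in> F) \<and>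
     (\<forall>a\<in>F. - a \<in> F \<and> inverse a \<in> F)"

definition gen_field :: "'a::field set \<Rightarrow> 'a set" where
  "gen_field T = \<Inter>{F. is_subfield F \<and> T \<subseteq> F}"

definition is_derivation :: "('a::field \<Rightarrow> 'a) \<Rightarrow> bool" where
  "is_derivation D \<longleftrightarrow> (\<forall>a b. D (a + b) = D a + D b \<and> D (a * b) = a * D b + b * D a)"

definition Kfield :: "('n::{finite,linorder} \<Rightarrow> 'n mpoly) \<Rightarrow> 'n ratf set" where
  "Kfield \<phi> = gen_field (range (\<lambda>c. to_ratf (mp_const c)) \<union> range (\<lambda>i. to_ratf (\<phi> i)))"

text \<open>delta_i: the unique derivation of L extending d/dz_i on K = C(z), i.e. the unique
  derivation of L vanishing on C and sending z_j to [i = j].\<close>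
definition delta :: "('n::{finite,linorder} \<Rightarrow> 'n mpoly) \<Rightarrow> 'n \<Rightarrow> 'n ratf \<Rightarrow> 'n ratf" where
  "delta \<phi> i = (THE D. is_derivation D \<and> (\<forall>c. D (to_ratf (mp_const c)) = 0) \<and>
                     (\<forall>j. D (to_ratf (\<phi> j)) = (if j = i then 1 else 0)))"

definition map_mat :: "('a \<Rightarrow> 'b) \<Rightarrow> 'a^'n^'m \<Rightarrow> 'b^'n^'m" where
  "map_mat f A = (\<chi> i j. f (A $ i $ j))"

definition jacobian :: "('n::{finite,linorder} \<Rightarrow> 'n mpoly) \<Rightarrow> (('n ratf, 'n) vec, 'n) vec" where
  "jacobian \<phi> = (\<chi> i j. to_ratf (mp_pderiv j (\<phi> i)))"

definition Amat :: "('n::{finite,linorder} \<Rightarrow> 'n mpoly) \<Rightarrow> 'n \<Rightarrow> (('n ratf, 'n) vec, 'n) vec" where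
  "Amat \<phi> i = map_mat (delta \<phi> i) (jacobian \<phi>) ** matrix_inv (jacobian \<phi>)"

definition picard_vessiot :: "'a::field set \<Rightarrow> ('i \<Rightarrow> 'a \<Rightarrow> 'a) \<Rightarrow> ('i \<Rightarrow> 'a^'N^'N) \<Rightarrow> bool" where
  "picard_vessiot K \<delta> A \<longleftrightarrow>
     {c. \<forall>i. \<delta> i c = 0} = {c\<in>K. \<forall>i. \<delta> i c = 0} \<and>
     (\<exists>U::'a^'N^'N. invertible U \<and> (\<forall>i. map_mat (\<delta> i) U = A i ** U) \<and>
        gen_field (K \<union> {U $ r $ s | r s. True}) = UNIV)"

end

theory Submission
  imports Defs
begin
lemma mp_const_add: "mp_const (a + b) = mp_const a + mp_const b"
  by (simp add: mp_const_def single_add)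
lemma mp_const_mult: "mp_const (a * b) = mp_const a * mp_const b"
  by (simp add: mp_const_def mult_single)
lemma mp_const_0[simp]: "mp_const 0 = 0"
  by (simp add: mp_const_def)
lemma mp_const_1[simp]: "mp_const 1 = 1"
  by (simp add: mp_const_def)
lemma mp_const_uminus: "mp_const (- a) = - mp_const a"
  by (simp add: mp_const_def single_uminus)
lemma mp_const_diff: "mp_const (a - b) = mp_const a - mp_const b"
  by (simp add: mp_const_def single_diff)
lemma mp_const_inj: "mp_const a = mp_const b \<longleftrightarrow> a = b"
  by (metis mp_const_def lookup_single_eq)
lemma mp_const_of_nat: "mp_const (of_nat k) = of_nat k"
  by (simp add: mp_const_def)

lemma poly_mapping_sum_single:
  fixes p :: "'a \<Rightarrow>\<^sub>0 'b::comm_monoid_add"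
  assumes "finite A" "Poly_Mapping.keys p \<subseteq> A"
  shows "p = (\<Sum>m\<in>A. Poly_Mapping.single m (Poly_Mapping.lookup p m))"
proof (rule poly_mapping_eqI)
  fix k
  have "Poly_Mapping.lookup (\<Sum>m\<in>A. Poly_Mapping.single m (Poly_Mapping.lookup p m)) k
      = (\<Sum>m\<in>A. (Poly_Mapping.lookup p m when m = k))"
    by (simp add: lookup_sum lookup_single)
  also have "\<dots> = Poly_Mapping.lookup p k"
  proof (cases "k \<in> A")
    case True
    then show ?thesis using assms(1) by (simp add: when_def sum.delta)
  next
    case False
    then have "Poly_Mapping.lookup p k = 0" using assms(2) by (auto simp: in_keys_iff)
    then show ?thesis using False assms(1) by (simp add: when_def sum.delta)
  qed
  finally show "Poly_Mapping.lookup p k = Poly_Mapping.lookup (\<Sum>m\<in>A. Poly_Mapping.single m (Poly_Mapping.lookup p m)) k" ..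
qed

lemma mp_var_power: "mp_var i ^ k = Poly_Mapping.single (Poly_Mapping.single i k) 1"
  by (induction k) (simp_all add: mp_var_def mult_single single_add[symmetric] add.commute)

lemma prod_single_one:
  assumes "finite A"
  shows "(\<Prod>i\<in>A. Poly_Mapping.single (f i) (1::'b::comm_semiring_1)) = Poly_Mapping.single (\<Sum>i\<in>A. f i) 1"
  using assms by (induction A rule: finite_induct) (simp_all add: mult_single)

lemma monomial_decomp:
  fixes m :: "'n::finite \<Rightarrow>\<^sub>0 nat"
  shows "(\<Sum>i\<in>UNIV. Poly_Mapping.single i (Poly_Mapping.lookup m i)) = m"
  using poly_mapping_sum_single[of UNIV m] by simp

lemma single_as_prod:
  fixes m :: "'n::finite \<Rightarrow>\<^sub>0 nat"
  shows "Poly_Mapping.single m c = mp_const c * (\<Prod>i\<in>UNIV. mp_var i ^ Poly_Mapping.lookup m i)"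
  by (simp add: mp_var_power prod_single_one monomial_decomp mp_const_def mult_single)

lemma mpoly_induct[case_names const var add mult]:
  fixes P :: "'n::finite mpoly \<Rightarrow> bool"
  assumes C: "\<And>c. P (mp_const c)" and V: "\<And>i. P (mp_var i)"
    and A: "\<And>p q. P p \<Longrightarrow> P q \<Longrightarrow> P (p + q)"
    and M: "\<And>p q. P p \<Longrightarrow> P q \<Longrightarrow> P (p * q)"
  shows "P p"
proof -
  have P0: "P 0" using C[of 0] by simp
  have P1: "P 1" using C[of 1] by simp
  have Ppow: "P (mp_var i ^ k)" for i k
    by (induction k) (simp_all add: P1 M V)
  have Pprod: "P (\<Prod>i\<in>B. f i)" if "finite B" "\<And>i. P (f i)" for B and f :: "'n \<Rightarrow> 'n mpoly"
    using that by (induction B rule: finite_induct) (simp_all add: P1 M)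
  have Psum: "P (\<Sum>i\<in>B. f i)" if "finite B" "\<And>i. i \<in> B \<Longrightarrow> P (f i)" for B and f :: "('n \<Rightarrow>\<^sub>0 nat) \<Rightarrow> 'n mpoly"
    using that by (induction B rule: finite_induct) (simp_all add: P0 A)
  have "P (Poly_Mapping.single m c)" for m c
    unfolding single_as_prod by (intro M C Pprod Ppow) auto
  then have "P (\<Sum>m\<in>Poly_Mapping.keys p. Poly_Mapping.single m (Poly_Mapping.lookup p m))"
    by (intro Psum) auto
  then show ?thesis
    using poly_mapping_sum_single[of "Poly_Mapping.keys p" p] by simp
qed

definition ev_mon :: "('n::finite \<Rightarrow> 'm mpoly) \<Rightarrow> ('n \<Rightarrow>\<^sub>0 nat) \<Rightarrow> 'm mpoly" where
  "ev_mon s m = (\<Prod>i\<in>UNIV. s i ^ Poly_Mapping.lookup m i)"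

lemma mp_subst_sum:
  assumes "finite A" "Poly_Mapping.keys p \<subseteq> A"
  shows "mp_subst s p = (\<Sum>m\<in>A. mp_const (Poly_Mapping.lookup p m) * ev_mon s m)"
  unfolding mp_subst_def ev_mon_def
  by (rule sum.mono_neutral_left) (use assms in \<open>auto simp: in_keys_iff\<close>)

lemma ev_mon_add: "ev_mon s (a + b) = ev_mon s a * ev_mon s b"
  by (simp add: ev_mon_def lookup_add power_add prod.distrib)

lemma ev_mon_0[simp]: "ev_mon s 0 = 1"
  by (simp add: ev_mon_def)

lemma ev_mon_var: "ev_mon s (Poly_Mapping.single i 1) = s i"
proof -
  have "ev_mon s (Poly_Mapping.single i 1) = (\<Prod>j\<in>UNIV. if j = i then s i else 1)"
    unfolding ev_mon_def by (rule prod.cong) (auto simp: lookup_single when_def)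
  thus ?thesis by (simp add: prod.delta)
qed

lemma mp_subst_add: "mp_subst s (p + q) = mp_subst s p + mp_subst s q"
proof -
  let ?A = "Poly_Mapping.keys p \<union> Poly_Mapping.keys q"
  have k: "Poly_Mapping.keys (p + q) \<subseteq> ?A" by (rule keys_add)
  show ?thesis
    by (simp add: mp_subst_sum[OF _ k] mp_subst_sum[of ?A p] mp_subst_sum[of ?A q]
        lookup_add mp_const_add distrib_right sum.distrib)
qed

lemma mp_subst_0[simp]: "mp_subst s 0 = 0"
  by (simp add: mp_subst_def)

lemma mp_subst_sum_gen: "mp_subst s (\<Sum>i\<in>B. f i) = (\<Sum>i\<in>B. mp_subst s (f i))"
  by (induction B rule: infinite_finite_induct) (simp_all add: mp_subst_add)

lemma mp_subst_single: "mp_subst s (Poly_Mapping.single m c) = mp_const c * ev_mon s m"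
  by (subst mp_subst_sum[of "{m}"]) auto

lemma mp_subst_mult: "mp_subst s (p * q) = mp_subst s p * mp_subst s q"
proof -
  let ?sp = "\<lambda>a. Poly_Mapping.single a (Poly_Mapping.lookup p a)"
  let ?sq = "\<lambda>b. Poly_Mapping.single b (Poly_Mapping.lookup q b)"
  have p: "p = (\<Sum>a\<in>Poly_Mapping.keys p. ?sp a)" by (rule poly_mapping_sum_single) auto
  have q: "q = (\<Sum>b\<in>Poly_Mapping.keys q. ?sq b)" by (rule poly_mapping_sum_single) auto
  have "p * q = (\<Sum>a\<in>Poly_Mapping.keys p. \<Sum>b\<in>Poly_Mapping.keys q. ?sp a * ?sq b)"
    by (subst p, subst q) (simp add: sum_product)
  then have "mp_subst s (p * q) = (\<Sum>a\<in>Poly_Mapping.keys p. \<Sum>b\<in>Poly_Mapping.keys q. mp_subst s (?sp a * ?sq b))"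
    by (simp add: mp_subst_sum_gen)
  also have "\<dots> = (\<Sum>a\<in>Poly_Mapping.keys p. \<Sum>b\<in>Poly_Mapping.keys q. mp_subst s (?sp a) * mp_subst s (?sq b))"
    by (simp add: mult_single mp_subst_single ev_mon_add mp_const_mult mult_ac)
  also have "\<dots> = mp_subst s (\<Sum>a\<in>Poly_Mapping.keys p. ?sp a) * mp_subst s (\<Sum>b\<in>Poly_Mapping.keys q. ?sq b)"
    by (simp add: mp_subst_sum_gen sum_product)
  finally show ?thesis using p q by simp
qed

lemma mp_subst_const[simp]: "mp_subst s (mp_const c) = mp_const c"
  by (simp add: mp_const_def mp_subst_single)

lemma mp_subst_var[simp]: "mp_subst s (mp_var i) = s i"
  unfolding mp_var_def mp_subst_single ev_mon_var by simp

lemma mp_subst_1[simp]: "mp_subst s 1 = 1"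
  using mp_subst_const[of s 1] by simp

lemma mp_subst_uminus: "mp_subst s (- p) = - mp_subst s p"
  by (metis add_eq_0_iff2 mp_subst_0 mp_subst_add)

lemma mp_subst_diff: "mp_subst s (p - q) = mp_subst s p - mp_subst s q"
  by (metis diff_conv_add_uminus mp_subst_add mp_subst_uminus)

lemma mp_subst_power: "mp_subst s (p ^ k) = mp_subst s p ^ k"
  by (induction k) (simp_all add: mp_subst_mult)

lemma mp_subst_prod: "mp_subst s (\<Prod>i\<in>B. f i) = (\<Prod>i\<in>B. mp_subst s (f i))"
  by (induction B rule: infinite_finite_induct) (simp_all add: mp_subst_mult)

lemma mp_subst_comp: "mp_subst s (mp_subst t p) = mp_subst (\<lambda>i. mp_subst s (t i)) p"
  by (induction p rule: mpoly_induct) (simp_all add: mp_subst_add mp_subst_mult)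

lemma mp_subst_var_id[simp]: "mp_subst mp_var p = p"
  by (induction p rule: mpoly_induct) (simp_all add: mp_subst_add mp_subst_mult)

lemma mp_subst_eqI:
  assumes "\<And>i. s i = t i" shows "mp_subst s p = mp_subst t p"
  using assms by (metis ext)

abbreviation ej :: "'n \<Rightarrow> 'n \<Rightarrow>\<^sub>0 nat" where "ej j \<equiv> Poly_Mapping.single j 1"

lemma pderiv_sum:
  assumes "finite A" "Poly_Mapping.keys p \<subseteq> A"
  shows "mp_pderiv j p = (\<Sum>m\<in>A. Poly_Mapping.single (m - ej j) (of_nat (Poly_Mapping.lookup m j) * Poly_Mapping.lookup p m))"
  unfolding mp_pderiv_def
  by (rule sum.mono_neutral_left) (use assms in \<open>auto simp: in_keys_iff\<close>)

lemma pderiv_add: "mp_pderiv j (p + q) = mp_pderiv j p + mp_pderiv j q"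
proof -
  let ?A = "Poly_Mapping.keys p \<union> Poly_Mapping.keys q"
  have k: "Poly_Mapping.keys (p + q) \<subseteq> ?A" by (rule keys_add)
  show ?thesis
    by (simp add: pderiv_sum[OF _ k] pderiv_sum[of ?A p] pderiv_sum[of ?A q]
        lookup_add distrib_left single_add sum.distrib)
qed

lemma pderiv_0[simp]: "mp_pderiv j 0 = 0"
  by (simp add: mp_pderiv_def)

lemma pderiv_sum_gen: "mp_pderiv j (\<Sum>i\<in>B. f i) = (\<Sum>i\<in>B. mp_pderiv j (f i))"
  by (induction B rule: infinite_finite_induct) (simp_all add: pderiv_add)

lemma pderiv_single: "mp_pderiv j (Poly_Mapping.single m c) = Poly_Mapping.single (m - ej j) (of_nat (Poly_Mapping.lookup m j) * c)"
  by (subst pderiv_sum[of "{m}"]) auto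

lemma add_minus_ej:
  assumes "Poly_Mapping.lookup b j > 0"
  shows "a + (b - ej j) = a + b - ej j"
  by (rule poly_mapping_eqI) (use assms in \<open>auto simp: lookup_add lookup_minus lookup_single when_def\<close>)

lemma single_shift:
  "Poly_Mapping.single (a + (b - ej j)) (of_nat (Poly_Mapping.lookup b j) * c)
   = Poly_Mapping.single (a + b - ej j) (of_nat (Poly_Mapping.lookup b j) * c)"
  using add_minus_ej[of b j a] by (cases "Poly_Mapping.lookup b j > 0") auto

lemma pderiv_single_mult:
  "mp_pderiv j (Poly_Mapping.single a c * Poly_Mapping.single b d)
   = Poly_Mapping.single a c * mp_pderiv j (Poly_Mapping.single b d)
     + Poly_Mapping.single b d * mp_pderiv j (Poly_Mapping.single a c)"
proof -
  have e1: "Poly_Mapping.single a c * mp_pderiv j (Poly_Mapping.single b d)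
     = Poly_Mapping.single (a + b - ej j) (of_nat (Poly_Mapping.lookup b j) * (c * d))"
    using single_shift[of a b j "c * d"] by (simp add: pderiv_single mult_single mult_ac)
  have e2: "Poly_Mapping.single b d * mp_pderiv j (Poly_Mapping.single a c)
     = Poly_Mapping.single (a + b - ej j) (of_nat (Poly_Mapping.lookup a j) * (c * d))"
    using single_shift[of b a j "c * d"] by (simp add: pderiv_single mult_single mult_ac add.commute)
  show ?thesis
    unfolding e1 e2 by (simp add: pderiv_single mult_single lookup_add single_add[symmetric] distrib_right add.commute)
qed

lemma pderiv_mult: "mp_pderiv j (p * q) = p * mp_pderiv j q + q * mp_pderiv j p"
proof -
  let ?sp = "\<lambda>a. Poly_Mapping.single a (Poly_Mapping.lookup p a)"
  let ?sq = "\<lambda>b. Poly_Mapping.single b (Poly_Mapping.lookup q b)"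
  let ?P = "Poly_Mapping.keys p" and ?Q = "Poly_Mapping.keys q"
  have p: "p = (\<Sum>a\<in>?P. ?sp a)" by (rule poly_mapping_sum_single) auto
  have q: "q = (\<Sum>b\<in>?Q. ?sq b)" by (rule poly_mapping_sum_single) auto
  have "p * q = (\<Sum>a\<in>?P. \<Sum>b\<in>?Q. ?sp a * ?sq b)"
    by (subst p, subst q) (simp add: sum_product)
  then have "mp_pderiv j (p * q) = (\<Sum>a\<in>?P. \<Sum>b\<in>?Q. mp_pderiv j (?sp a * ?sq b))"
    by (simp add: pderiv_sum_gen)
  also have "\<dots> = (\<Sum>a\<in>?P. \<Sum>b\<in>?Q. ?sp a * mp_pderiv j (?sq b)) + (\<Sum>a\<in>?P. \<Sum>b\<in>?Q. ?sq b * mp_pderiv j (?sp a))"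
    by (simp add: pderiv_single_mult sum.distrib)
  also have "\<dots> = (\<Sum>a\<in>?P. ?sp a) * mp_pderiv j (\<Sum>b\<in>?Q. ?sq b) + (\<Sum>b\<in>?Q. ?sq b) * mp_pderiv j (\<Sum>a\<in>?P. ?sp a)"
    by (simp add: pderiv_sum_gen sum_product sum_distrib_left sum_distrib_right mult_ac sum.swap[of _ ?P ?Q])
  finally show ?thesis using p q by simp
qed

lemma pderiv_const[simp]: "mp_pderiv j (mp_const c) = 0"
  by (simp add: mp_const_def pderiv_single)

lemma pderiv_var: "mp_pderiv j (mp_var i) = (if i = j then 1 else 0)"
  by (simp add: mp_var_def pderiv_single lookup_single when_def)

lemma pderiv_uminus: "mp_pderiv j (- p) = - mp_pderiv j p"
  by (metis add_eq_0_iff2 pderiv_0 pderiv_add)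

lemma pderiv_diff: "mp_pderiv j (p - q) = mp_pderiv j p - mp_pderiv j q"
  by (metis diff_conv_add_uminus pderiv_add pderiv_uminus)

definition rder :: "('a::comm_ring_1 \<Rightarrow> 'a) \<Rightarrow> bool" where
  "rder d \<longleftrightarrow> (\<forall>a b. d (a + b) = d a + d b \<and> d (a * b) = a * d b + b * d a)"

lemma rder_add: "rder d \<Longrightarrow> d (a + b) = d a + d b" by (simp add: rder_def)
lemma rder_mult: "rder d \<Longrightarrow> d (a * b) = a * d b + b * d a" by (simp add: rder_def)
lemma rder_0: "rder d \<Longrightarrow> d 0 = 0" using rder_add[of d 0 0] by simp
lemma rder_1: "rder d \<Longrightarrow> d 1 = 0" using rder_mult[of d 1 1] by simp
lemma rder_uminus: "rder d \<Longrightarrow> d (- a) = - d a"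
proof -
  assume d: "rder d"
  have "d a + d (- a) = 0" using rder_add[OF d, of a "-a"] rder_0[OF d] by simp
  then show ?thesis by (metis neg_eq_iff_add_eq_0)
qed
lemma rder_diff: "rder d \<Longrightarrow> d (a - b) = d a - d b"
  using rder_add[of d a "-b"] rder_uminus[of d b] by simp

lemma is_derivation_rder: "is_derivation D \<longleftrightarrow> rder D"
  by (simp add: is_derivation_def rder_def)

lemma rder_pderiv: "rder (mp_pderiv j)"
  by (simp add: rder_def pderiv_add pderiv_mult)

definition fder :: "('a::idom \<Rightarrow> 'a) \<Rightarrow> 'a fract \<Rightarrow> 'a fract" where
  "fder d x = (SOME y. \<exists>p q. q \<noteq> 0 \<and> x = Fract p q \<and> y = Fract (q * d p - p * d q) (q * q))"

lemma fder_welldef: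
  assumes d: "rder d" and q: "q \<noteq> 0" "q' \<noteq> 0" and eq: "Fract p q = Fract p' q'"
  shows "Fract (q * d p - p * d q) (q * q) = Fract (q' * d p' - p' * d q') (q' * q')"
proof -
  have e: "p * q' = p' * q" using eq q by (simp add: eq_fract)
  have e2: "d p * q' + p * d q' = d p' * q + p' * d q"
    using arg_cong[OF e, of d] d by (simp add: rder_mult mult_ac add_ac)
  have e3: "q' * d p = p' * d q + q * d p' - p * d q'"
    using e2 by (simp add: algebra_simps eq_diff_eq)
  have "(q * d p - p * d q) * (q' * q') = q * q' * (q' * d p) - (p * q') * q' * d q"
    by (simp add: algebra_simps)
  also have "\<dots> = q * q' * (p' * d q + q * d p' - p * d q') - (p' * q) * q' * d q"
    by (simp only: e3 e)
  also have "\<dots> = q * q * q' * d p' - q * (p * q') * d q'"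
    by (simp add: algebra_simps)
  also have "\<dots> = q * q * q' * d p' - q * (p' * q) * d q'"
    by (simp only: e)
  also have "\<dots> = (q' * d p' - p' * d q') * (q * q)"
    by (simp add: algebra_simps)
  finally have "(q * d p - p * d q) * (q' * q') = (q' * d p' - p' * d q') * (q * q)" .
  then show ?thesis using q by (simp add: eq_fract)
qed

lemma fder_Fract:
  assumes d: "rder d" and q: "q \<noteq> 0"
  shows "fder d (Fract p q) = Fract (q * d p - p * d q) (q * q)"
proof -
  let ?P = "\<lambda>y. \<exists>p' q'. q' \<noteq> 0 \<and> Fract p q = Fract p' q' \<and> y = Fract (q' * d p' - p' * d q') (q' * q')"
  have "?P (Fract (q * d p - p * d q) (q * q))" using q by blast
  then have "?P (fder d (Fract p q))" unfolding fder_def by (rule someI)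
  then show ?thesis using fder_welldef[OF d] q by metis
qed

lemma fder_derivation:
  assumes d: "rder d"
  shows "is_derivation (fder d)"
  unfolding is_derivation_def
proof (intro allI conjI)
  fix x y :: "'a fract"
  obtain a b where x: "x = Fract a b" "b \<noteq> 0" by (cases x)
  obtain c e where y: "y = Fract c e" "e \<noteq> 0" by (cases y)
  show "fder d (x + y) = fder d x + fder d y"
    using x y d
    by (simp add: fder_Fract eq_fract rder_add rder_mult algebra_simps)
  show "fder d (x * y) = x * fder d y + y * fder d x"
    using x y d
    by (simp add: fder_Fract eq_fract rder_add rder_mult algebra_simps)
qed

lemma fder_Fract1: "rder d \<Longrightarrow> fder d (Fract p 1) = Fract (d p) 1"
  by (simp add: fder_Fract rder_1)

definition fhom :: "('a::idom \<Rightarrow> 'b::idom) \<Rightarrow> 'a fract \<Rightarrow> 'b fract" where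
  "fhom h x = (SOME y. \<exists>p q. q \<noteq> 0 \<and> x = Fract p q \<and> y = Fract (h p) (h q))"

definition rhom :: "('a::comm_ring_1 \<Rightarrow> 'b::comm_ring_1) \<Rightarrow> bool" where
  "rhom h \<longleftrightarrow> (\<forall>a b. h (a + b) = h a + h b \<and> h (a * b) = h a * h b) \<and> h 1 = 1"

lemma rhom_add: "rhom h \<Longrightarrow> h (a + b) = h a + h b" by (simp add: rhom_def)
lemma rhom_mult: "rhom h \<Longrightarrow> h (a * b) = h a * h b" by (simp add: rhom_def)
lemma rhom_1: "rhom h \<Longrightarrow> h 1 = 1" by (simp add: rhom_def)
lemma rhom_0: "rhom h \<Longrightarrow> h 0 = 0" using rhom_add[of h 0 0] by simp
lemma rhom_uminus: "rhom h \<Longrightarrow> h (- a) = - h a"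
proof -
  assume h: "rhom h"
  have "h a + h (- a) = 0" using rhom_add[OF h, of a "-a"] rhom_0[OF h] by simp
  then show ?thesis by (metis neg_eq_iff_add_eq_0)
qed
lemma rhom_diff: "rhom h \<Longrightarrow> h (a - b) = h a - h b"
  using rhom_add[of h a "-b"] rhom_uminus[of h b] by simp

lemma fhom_Fract:
  assumes h: "rhom h" and inj: "\<And>a. h a = 0 \<Longrightarrow> a = 0" and q: "q \<noteq> 0"
  shows "fhom h (Fract p q) = Fract (h p) (h q)"
proof -
  let ?P = "\<lambda>y. \<exists>p' q'. q' \<noteq> 0 \<and> Fract p q = Fract p' q' \<and> y = Fract (h p') (h q')"
  have "?P (Fract (h p) (h q))" using q by blast
  then have "?P (fhom h (Fract p q))" unfolding fhom_def by (rule someI)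
  then obtain p' q' where pq: "q' \<noteq> 0" "Fract p q = Fract p' q'" "fhom h (Fract p q) = Fract (h p') (h q')"
    by blast
  have "p * q' = p' * q" using pq q by (simp add: eq_fract)
  then have "h p * h q' = h p' * h q" using h by (metis rhom_mult)
  moreover have "h q \<noteq> 0" "h q' \<noteq> 0" using inj q pq(1) by auto
  ultimately show ?thesis using pq(3) by (simp add: eq_fract)
qed

lemma fhom_props:
  assumes h: "rhom h" and inj: "\<And>a. h a = 0 \<Longrightarrow> a = 0"
  shows "fhom h (x + y) = fhom h x + fhom h y" "fhom h (x * y) = fhom h x * fhom h y"
    "fhom h (Fract p 1) = Fract (h p) 1"
proof -
  obtain a b where x: "x = Fract a b" "b \<noteq> 0" by (cases x)
  obtain c e where y: "y = Fract c e" "e \<noteq> 0" by (cases y)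
  have nz: "h b \<noteq> 0" "h e \<noteq> 0" using inj x y by auto
  show "fhom h (x + y) = fhom h x + fhom h y"
    using x y nz by (simp add: fhom_Fract[OF h inj] rhom_add[OF h] rhom_mult[OF h])
  show "fhom h (x * y) = fhom h x * fhom h y"
    using x y nz by (simp add: fhom_Fract[OF h inj] rhom_add[OF h] rhom_mult[OF h])
  show "fhom h (Fract p 1) = Fract (h p) 1"
    by (simp add: fhom_Fract[OF h inj] rhom_1[OF h])
qed

lemma der_0: "is_derivation D \<Longrightarrow> D 0 = 0" by (simp add: is_derivation_rder rder_0)
lemma der_1: "is_derivation D \<Longrightarrow> D 1 = 0" by (simp add: is_derivation_rder rder_1)
lemma der_add: "is_derivation D \<Longrightarrow> D (a + b) = D a + D b" by (simp add: is_derivation_def)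
lemma der_mult: "is_derivation D \<Longrightarrow> D (a * b) = a * D b + b * D a" by (simp add: is_derivation_def)
lemma der_uminus: "is_derivation D \<Longrightarrow> D (- a) = - D a" by (simp add: is_derivation_rder rder_uminus)
lemma der_diff: "is_derivation D \<Longrightarrow> D (a - b) = D a - D b" by (simp add: is_derivation_rder rder_diff)
lemma der_sum: "is_derivation D \<Longrightarrow> D (\<Sum>i\<in>A. f i) = (\<Sum>i\<in>A. D (f i))"
  by (induction A rule: infinite_finite_induct) (simp_all add: der_0 der_add)
lemma der_inverse:
  assumes D: "is_derivation D"
  shows "D (inverse a) = - D a * inverse a * inverse a"
proof (cases "a = 0")
  case True then show ?thesis using der_0[OF D] by simp
next
  case False
  have "0 = D (a * inverse a)" using False der_1[OF D] by simp
  also have "\<dots> = a * D (inverse a) + inverse a * D a" by (rule der_mult[OF D])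
  finally have "a * D (inverse a) = - (inverse a * D a)" by (simp add: eq_neg_iff_add_eq_0)
  then show ?thesis using False by (simp add: field_simps)
qed
lemma der_of_nat: "is_derivation D \<Longrightarrow> D (of_nat n) = 0"
  by (induction n) (simp_all add: der_0 der_1 der_add)

lemma der_lincomb:
  assumes "\<And>l. is_derivation (Dl l)"
  shows "is_derivation (\<lambda>x. \<Sum>l\<in>A. Dl l x * w l)"
  using assms by (simp add: is_derivation_def sum.distrib sum_distrib_left algebra_simps)

lemma der_diff_fun:
  assumes "is_derivation D1" "is_derivation D2"
  shows "is_derivation (\<lambda>x. D1 x - D2 x)"
  using assms by (simp add: is_derivation_def algebra_simps)

lemma der_commutator:
  assumes D1: "is_derivation D1" and D2: "is_derivation D2"
  shows "is_derivation (\<lambda>x. D1 (D2 x) - D2 (D1 x))"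
  using assms by (simp add: is_derivation_def algebra_simps)

lemma subfield_UNIV: "is_subfield UNIV" by (simp add: is_subfield_def)

lemma gen_field_subfield: "is_subfield (gen_field T)"
  unfolding gen_field_def is_subfield_def by auto

lemma gen_field_sup: "T \<subseteq> gen_field T"
  unfolding gen_field_def by auto

lemma gen_field_least: "is_subfield F \<Longrightarrow> T \<subseteq> F \<Longrightarrow> gen_field T \<subseteq> F"
  unfolding gen_field_def by auto

lemma subfield_0: "is_subfield F \<Longrightarrow> 0 \<in> F" by (simp add: is_subfield_def)
lemma subfield_1: "is_subfield F \<Longrightarrow> 1 \<in> F" by (simp add: is_subfield_def)
lemma subfield_add: "is_subfield F \<Longrightarrow> a \<in> F \<Longrightarrow> b \<in> F \<Longrightarrow> a + b \<in> F" by (simp add: is_subfield_def)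
lemma subfield_mult: "is_subfield F \<Longrightarrow> a \<in> F \<Longrightarrow> b \<in> F \<Longrightarrow> a * b \<in> F" by (simp add: is_subfield_def)
lemma subfield_uminus: "is_subfield F \<Longrightarrow> a \<in> F \<Longrightarrow> - a \<in> F" by (simp add: is_subfield_def)
lemma subfield_inverse: "is_subfield F \<Longrightarrow> a \<in> F \<Longrightarrow> inverse a \<in> F" by (simp add: is_subfield_def)
lemma subfield_diff: "is_subfield F \<Longrightarrow> a \<in> F \<Longrightarrow> b \<in> F \<Longrightarrow> a - b \<in> F"
  using subfield_add subfield_uminus by (metis diff_conv_add_uminus)
lemma subfield_divide: "is_subfield F \<Longrightarrow> a \<in> F \<Longrightarrow> b \<in> F \<Longrightarrow> a / b \<in> F"
  using subfield_mult subfield_inverse by (metis divide_inverse)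
lemma subfield_sum: "is_subfield F \<Longrightarrow> (\<And>i. i \<in> A \<Longrightarrow> f i \<in> F) \<Longrightarrow> (\<Sum>i\<in>A. f i) \<in> F"
  by (induction A rule: infinite_finite_induct) (simp_all add: subfield_0 subfield_add)
lemma subfield_prod: "is_subfield F \<Longrightarrow> (\<And>i. i \<in> A \<Longrightarrow> f i \<in> F) \<Longrightarrow> (\<Prod>i\<in>A. f i) \<in> F"
  by (induction A rule: infinite_finite_induct) (simp_all add: subfield_1 subfield_mult)
lemma subfield_of_nat: "is_subfield F \<Longrightarrow> of_nat n \<in> F"
  by (induction n) (simp_all add: subfield_0 subfield_1 subfield_add)

lemma der_kernel_subfield:
  assumes "is_derivation D"
  shows "is_subfield {x. D x = 0}"
  using assms by (simp add: is_subfield_def der_0 der_1 der_add der_mult der_uminus der_inverse)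

lemma to_ratf_add: "to_ratf (p + q) = to_ratf p + to_ratf q" by (simp add: to_ratf_def)
lemma to_ratf_mult: "to_ratf (p * q) = to_ratf p * to_ratf q" by (simp add: to_ratf_def)
lemma to_ratf_diff: "to_ratf (p - q) = to_ratf p - to_ratf q" by (simp add: to_ratf_def)
lemma to_ratf_uminus: "to_ratf (- p) = - to_ratf p" by (simp add: to_ratf_def)
lemma to_ratf_0[simp]: "to_ratf 0 = 0" by (simp add: to_ratf_def fract_collapse)
lemma to_ratf_1[simp]: "to_ratf 1 = 1" by (simp add: to_ratf_def One_fract_def)
lemma to_ratf_inj: "to_ratf p = to_ratf q \<longleftrightarrow> p = q" by (simp add: to_ratf_def eq_fract)
lemma to_ratf_eq0: "to_ratf p = 0 \<longleftrightarrow> p = 0" using to_ratf_inj[of p 0] by simp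
lemma to_ratf_sum: "to_ratf (\<Sum>i\<in>A. f i) = (\<Sum>i\<in>A. to_ratf (f i))"
  by (induction A rule: infinite_finite_induct) (simp_all add: to_ratf_add)
lemma to_ratf_prod: "to_ratf (\<Prod>i\<in>A. f i) = (\<Prod>i\<in>A. to_ratf (f i))"
  by (induction A rule: infinite_finite_induct) (simp_all add: to_ratf_mult)
lemma to_ratf_of_nat: "to_ratf (of_nat n) = of_nat n"
  by (induction n) (simp_all add: to_ratf_add)
lemma Fract_to_ratf: "q \<noteq> 0 \<Longrightarrow> Fract p q = to_ratf p / to_ratf q"
  by (simp add: to_ratf_def)

abbreviation Xv :: "'n::{finite,linorder} \<Rightarrow> 'n ratf" where "Xv l \<equiv> to_ratf (mp_var l)"
abbreviation Cst :: "complex \<Rightarrow> 'n::{finite,linorder} ratf" where "Cst c \<equiv> to_ratf (mp_const c)"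

definition dd :: "'n::{finite,linorder} \<Rightarrow> 'n ratf \<Rightarrow> 'n ratf" where
  "dd l = fder (mp_pderiv l)"

lemma dd_derivation: "is_derivation (dd l)"
  unfolding dd_def by (rule fder_derivation[OF rder_pderiv])

lemma dd_to_ratf: "dd l (to_ratf p) = to_ratf (mp_pderiv l p)"
  unfolding dd_def to_ratf_def by (rule fder_Fract1[OF rder_pderiv])

lemma dd_Xv: "dd l (Xv m) = (if m = l then 1 else 0)"
  by (simp add: dd_to_ratf pderiv_var)

lemma dd_Cst: "dd l (Cst c) = 0"
  by (simp add: dd_to_ratf)

lemma der_zero_on_polys:
  assumes D: "is_derivation D" and C: "\<And>c. D (Cst c) = 0" and V: "\<And>l. D (Xv l) = 0"
  shows "D (to_ratf p) = 0"
  by (induction p rule: mpoly_induct) (simp_all add: C V to_ratf_add to_ratf_mult der_add[OF D] der_mult[OF D])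

lemma der_zero:
  assumes D: "is_derivation D" and C: "\<And>c. D (Cst c) = 0" and V: "\<And>l. D (Xv l) = 0"
  shows "D (x :: 'n::{finite,linorder} ratf) = 0"
proof -
  obtain p q where x: "x = Fract p q" "q \<noteq> 0" by (cases x)
  have "x = to_ratf p * inverse (to_ratf q)" using x by (simp add: Fract_to_ratf divide_inverse)
  then show ?thesis
    by (simp add: der_mult[OF D] der_inverse[OF D] der_zero_on_polys[OF D C V])
qed

lemma der_ext:
  assumes D1: "is_derivation D1" and D2: "is_derivation D2"
    and C: "\<And>c. D1 (Cst c) = D2 (Cst c)" and V: "\<And>l. D1 (Xv l) = D2 (Xv l)"
  shows "D1 (x :: 'n::{finite,linorder} ratf) = D2 x"
  using der_zero[OF der_diff_fun[OF D1 D2], of x] C V by simp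

lemma chain_rule:
  assumes D: "is_derivation D" and C: "\<And>c. D (Cst c) = 0"
  shows "D (x :: 'n::{finite,linorder} ratf) = (\<Sum>l\<in>UNIV. dd l x * D (Xv l))"
proof (rule der_ext[OF D der_lincomb[OF dd_derivation]])
  fix c show "D (Cst c) = (\<Sum>l\<in>UNIV. dd l (Cst c) * D (Xv l))" by (simp add: C dd_Cst)
next
  fix m
  have "(\<Sum>l\<in>UNIV. dd l (Xv m) * D (Xv l)) = (\<Sum>l\<in>UNIV. if l = m then D (Xv l) else 0)"
    by (rule sum.cong) (auto simp: dd_Xv)
  then show "D (Xv m) = (\<Sum>l\<in>UNIV. dd l (Xv m) * D (Xv l))" by simp
qed

lemma matrix_inv_props:
  fixes A :: "'a::semiring_1^'n^'n"
  assumes "invertible A"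
  shows "A ** matrix_inv A = mat 1" "matrix_inv A ** A = mat 1"
proof -
  have "\<exists>A'. A ** A' = mat 1 \<and> A' ** A = mat 1" using assms by (simp add: invertible_def)
  then have "A ** matrix_inv A = mat 1 \<and> matrix_inv A ** A = mat 1"
    unfolding matrix_inv_def by (rule someI_ex)
  then show "A ** matrix_inv A = mat 1" "matrix_inv A ** A = mat 1" by auto
qed

lemma matrix_inv_unique:
  fixes A B :: "'a::semiring_1^'n^'n"
  assumes "invertible A" "A ** B = mat 1"
  shows "matrix_inv A = B"
proof -
  have "matrix_inv A = matrix_inv A ** (A ** B)" using assms(2) by simp
  also have "\<dots> = B" by (simp add: matrix_mul_assoc matrix_inv_props[OF assms(1)])
  finally show ?thesis .
qed

lemma matrix_inv_mult:
  fixes A B :: "'a::semiring_1^'n^'n"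
  assumes "invertible A" "invertible B"
  shows "matrix_inv (A ** B) = matrix_inv B ** matrix_inv A"
proof (rule matrix_inv_unique)
  show "invertible (A ** B)" using assms by (rule invertible_mult)
  have "A ** B ** (matrix_inv B ** matrix_inv A) = A ** (B ** matrix_inv B) ** matrix_inv A"
    by (simp add: matrix_mul_assoc)
  then show "A ** B ** (matrix_inv B ** matrix_inv A) = mat 1"
    by (simp add: matrix_inv_props assms)
qed

lemma invertible_mat1: "invertible (mat 1 :: 'a::semiring_1^'n^'n)"
  unfolding invertible_def by (rule exI[of _ "mat 1"]) simp

lemma matrix_inv_mat1: "matrix_inv (mat 1 :: 'a::semiring_1^'n^'n) = mat 1"
  by (rule matrix_inv_unique[OF invertible_mat1]) simp

definition lvar :: "complex^'n^'n \<Rightarrow> 'n \<Rightarrow> 'n::finite mpoly" where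
  "lvar B j = (\<Sum>k\<in>UNIV. mp_const (B $ j $ k) * mp_var k)"

definition subm :: "complex^'n^'n \<Rightarrow> 'n::finite mpoly \<Rightarrow> 'n mpoly" where
  "subm B f = mp_subst (lvar B) f"

lemma gamma_subm: "gamma M f = subm (matrix_inv M) f"
  unfolding gamma_def subm_def by (simp add: lvar_def[abs_def])

lemma mp_const_sum: "mp_const (\<Sum>i\<in>A. f i) = (\<Sum>i\<in>A. mp_const (f i))"
  by (induction A rule: infinite_finite_induct) (simp_all add: mp_const_add)

lemma subm_lvar: "subm B (lvar C j) = lvar (C ** B) j"
proof -
  have "subm B (lvar C j) = (\<Sum>k\<in>UNIV. mp_const (C $ j $ k) * (\<Sum>l\<in>UNIV. mp_const (B $ k $ l) * mp_var l))"
    by (simp add: subm_def lvar_def mp_subst_sum_gen mp_subst_mult)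
  also have "\<dots> = (\<Sum>k\<in>UNIV. \<Sum>l\<in>UNIV. mp_const (C $ j $ k * B $ k $ l) * mp_var l)"
    by (simp add: sum_distrib_left mp_const_mult mult_ac)
  also have "\<dots> = (\<Sum>l\<in>UNIV. \<Sum>k\<in>UNIV. mp_const (C $ j $ k * B $ k $ l) * mp_var l)"
    by (rule sum.swap)
  also have "\<dots> = lvar (C ** B) j"
    by (simp add: lvar_def matrix_matrix_mult_def mp_const_sum sum_distrib_right)
  finally show ?thesis .
qed

lemma subm_subm: "subm B (subm C f) = subm (C ** B) f"
  unfolding subm_def[of B] subm_def[of C] mp_subst_comp
  by (simp add: subm_lvar[unfolded subm_def] subm_def)

lemma lvar_mat1: "lvar (mat 1) j = mp_var j"
proof -
  have "lvar (mat 1) j = (\<Sum>k\<in>UNIV. if k = j then mp_var k else 0)"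
    unfolding lvar_def by (rule sum.cong) (auto simp: mat_def)
  then show ?thesis by simp
qed

lemma subm_mat1[simp]: "subm (mat 1) f = f"
  by (simp add: subm_def lvar_mat1[abs_def])

lemma rhom_subm: "rhom (subm B)"
  by (simp add: rhom_def subm_def mp_subst_add mp_subst_mult)

lemma subm_const[simp]: "subm B (mp_const c) = mp_const c"
  by (simp add: subm_def)

lemma gamma_comp:
  assumes "invertible N" "invertible M"
  shows "gamma N (gamma M f) = gamma (N ** M) f"
  by (simp add: gamma_subm subm_subm matrix_inv_mult assms)

lemma gamma_inj:
  assumes "invertible M" "gamma M f = 0"
  shows "f = 0"
proof -
  have "f = subm (matrix_inv M ** M) f" by (simp add: matrix_inv_props assms)
  also have "\<dots> = subm M (gamma M f)" by (simp add: gamma_subm subm_subm)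
  also have "\<dots> = 0" using assms(2) by (simp add: subm_def)
  finally show ?thesis .
qed

lemma rhom_gamma: "rhom (gamma M)"
  unfolding gamma_subm[abs_def] by (rule rhom_subm)

lemma gamma_mat1[simp]: "gamma (mat 1) f = f"
  by (simp add: gamma_subm matrix_inv_mat1)

lemma generated_group_mult:
  assumes "g \<in> generated_group R" "h \<in> generated_group R"
  shows "g ** h \<in> generated_group R"
  using assms(1)
proof induction
  case gen_one then show ?case using assms(2) by simp
next
  case (gen_mult r g)
  have "r ** g ** h = r ** (g ** h)" by (simp only: matrix_mul_assoc)
  then show ?case using gen_mult generated_group.gen_mult by metis
next
  case (gen_inv r g)
  have "matrix_inv r ** g ** h = matrix_inv r ** (g ** h)" by (simp only: matrix_mul_assoc)
  then show ?case using gen_inv generated_group.gen_inv by metis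
qed

locale crg =
  fixes G :: "((complex, 'n::{finite,linorder}) vec, 'n) vec set"
  assumes crg: "complex_reflection_group G"
begin

lemma crg_all: "finite G \<and> (\<forall>M\<in>G. invertible M) \<and> G = generated_group {M\<in>G. complex_reflection M}"
  using crg unfolding complex_reflection_group_def .
lemma crg_p1: "finite G" using crg_all by (rule conjunct1)
lemma crg_p2: "\<forall>M\<in>G. invertible M" using crg_all by (rule conjunct1[OF conjunct2])
lemma crg_p3: "G = generated_group {M\<in>G. complex_reflection M}" using crg_all by (rule conjunct2[OF conjunct2])
lemmas crg_parts = crg_p1 crg_p2 crg_p3

lemma finG: "finite G" by (rule crg_parts(1))
lemma invG: "M \<in> G \<Longrightarrow> invertible M" using crg_parts(2) by blast
lemma oneG: "mat 1 \<in> G"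
proof -
  have "mat 1 \<in> generated_group {M\<in>G. complex_reflection M}" by (rule generated_group.gen_one)
  then show ?thesis using crg_parts(3) by (rule ssubst[where P = "\<lambda>X. mat 1 \<in> X", rotated])
qed
lemma multG: "M \<in> G \<Longrightarrow> N \<in> G \<Longrightarrow> M ** N \<in> G"
proof -
  define R where "R = {M\<in>G. complex_reflection M}"
  have Geq: "G = generated_group R" unfolding R_def by (rule crg_parts(3))
  assume "M \<in> G" "N \<in> G"
  then have "M \<in> generated_group R" "N \<in> generated_group R" using Geq by blast+
  then have "M ** N \<in> generated_group R" by (rule generated_group_mult)
  then show ?thesis using Geq by blast
qed

lemma bij_left: "N \<in> G \<Longrightarrow> bij_betw (\<lambda>M. N ** M) G G"
proof -
  assume N: "N \<in> G"
  have inj: "inj_on (\<lambda>M. N ** M) G"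
  proof (rule inj_onI)
    fix A B assume "N ** A = N ** B"
    then have "matrix_inv N ** (N ** A) = matrix_inv N ** (N ** B)" by simp
    then show "A = B" by (simp add: matrix_mul_assoc matrix_inv_props invG[OF N])
  qed
  moreover have "(\<lambda>M. N ** M) ` G \<subseteq> G" using multG N by auto
  ultimately have "(\<lambda>M. N ** M) ` G = G" using finG by (simp add: endo_inj_surj)
  then show ?thesis using inj by (simp add: bij_betw_def)
qed

lemma exists_inv: "M \<in> G \<Longrightarrow> \<exists>P\<in>G. M ** P = mat 1"
  using bij_left[of M] oneG unfolding bij_betw_def by (metis imageE)

end

definition sgm :: "((complex, 'n::{finite,linorder}) vec, 'n) vec \<Rightarrow> 'n ratf \<Rightarrow> 'n ratf" where
  "sgm M = fhom (gamma M)"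

context
  fixes M :: "((complex, 'n::{finite,linorder}) vec, 'n) vec"
  assumes invM: "invertible M"
begin

lemma sgm_Fract: "q \<noteq> 0 \<Longrightarrow> sgm M (Fract p q) = Fract (gamma M p) (gamma M q)"
  unfolding sgm_def by (rule fhom_Fract[OF rhom_gamma]) (use gamma_inj[OF invM] in auto)

lemma sgm_add: "sgm M (x + y) = sgm M x + sgm M y"
  unfolding sgm_def by (rule fhom_props[OF rhom_gamma]) (use gamma_inj[OF invM] in auto)

lemma sgm_mult: "sgm M (x * y) = sgm M x * sgm M y"
  unfolding sgm_def by (rule fhom_props[OF rhom_gamma]) (use gamma_inj[OF invM] in auto)

lemma sgm_to_ratf: "sgm M (to_ratf p) = to_ratf (gamma M p)"
  unfolding sgm_def to_ratf_def by (rule fhom_props[OF rhom_gamma]) (use gamma_inj[OF invM] in auto)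

lemma sgm_0: "sgm M 0 = 0" using sgm_to_ratf[of 0] rhom_0[OF rhom_gamma[of M]] by simp
lemma sgm_1: "sgm M 1 = 1" using sgm_to_ratf[of 1] rhom_1[OF rhom_gamma[of M]] by simp
lemma sgm_Cst: "sgm M (Cst c) = Cst c" by (simp add: sgm_to_ratf gamma_subm)

lemma rhom_sgm: "rhom (sgm M)"
  by (simp add: rhom_def sgm_add sgm_mult sgm_1)

lemma sgm_uminus: "sgm M (- x) = - sgm M x" by (rule rhom_uminus[OF rhom_sgm])
lemma sgm_diff: "sgm M (x - y) = sgm M x - sgm M y" by (rule rhom_diff[OF rhom_sgm])

lemma sgm_eq0: "sgm M x = 0 \<Longrightarrow> x = 0"
proof -
  assume s: "sgm M x = 0"
  obtain p q where x: "x = Fract p q" "q \<noteq> 0" by (cases x)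
  then have "Fract (gamma M p) (gamma M q) = 0" using s by (simp add: sgm_Fract)
  moreover have "gamma M q \<noteq> 0" using x gamma_inj[OF invM] by auto
  ultimately have "gamma M p * 1 = 0 * gamma M q"
    using eq_fract(1)[of "gamma M q" 1 "gamma M p" 0] by (simp add: fract_collapse)
  then have "gamma M p = 0" by simp
  then have "p = 0" using gamma_inj[OF invM] by blast
  then show "x = 0" using x by (simp add: fract_collapse)
qed

lemma sgm_inverse: "sgm M (inverse x) = inverse (sgm M x)"
proof (cases "x = 0")
  case True then show ?thesis by (simp add: sgm_0)
next
  case False
  have "sgm M x * sgm M (inverse x) = 1" using False by (simp add: sgm_mult[symmetric] sgm_1)
  then show ?thesis by (rule inverse_unique[symmetric])
qed

lemma sgm_sum: "sgm M (\<Sum>i\<in>A. f i) = (\<Sum>i\<in>A. sgm M (f i))"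
  by (induction A rule: infinite_finite_induct) (simp_all add: sgm_0 sgm_add)

lemma sgm_prod: "sgm M (\<Prod>i\<in>A. f i) = (\<Prod>i\<in>A. sgm M (f i))"
  by (induction A rule: infinite_finite_induct) (simp_all add: sgm_1 sgm_mult)

lemma sgm_divide: "sgm M (x / y) = sgm M x / sgm M y"
  unfolding divide_inverse sgm_mult sgm_inverse ..

end

lemma sgm_comp:
  assumes "invertible N" "invertible M"
  shows "sgm N (sgm M x) = sgm (N ** M) x"
proof -
  obtain p q where x: "x = Fract p q" "q \<noteq> 0" by (cases x)
  have q: "gamma M q \<noteq> 0" using x gamma_inj[OF assms(2)] by auto
  have "sgm N (sgm M x) = sgm N (Fract (gamma M p) (gamma M q))"
    unfolding x(1) by (subst sgm_Fract[OF assms(2) x(2)]) (rule refl)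
  also have "\<dots> = Fract (gamma N (gamma M p)) (gamma N (gamma M q))"
    by (rule sgm_Fract[OF assms(1) q])
  also have "\<dots> = Fract (gamma (N ** M) p) (gamma (N ** M) q)"
    by (simp only: gamma_comp[OF assms])
  also have "\<dots> = sgm (N ** M) x"
    unfolding x(1) by (rule sgm_Fract[OF invertible_mult[OF assms] x(2), symmetric])
  finally show ?thesis .
qed

lemma sgm_mat1: "sgm (mat 1) x = x"
proof -
  obtain p q where x: "x = Fract p q" "q \<noteq> 0" by (cases x)
  have "sgm (mat 1) (Fract p q) = Fract (gamma (mat 1) p) (gamma (mat 1) q)"
    by (rule sgm_Fract[OF invertible_mat1 x(2)])
  then show ?thesis unfolding x(1) by (simp only: gamma_mat1)
qed

lemma rhom_sum: "rhom h \<Longrightarrow> h (\<Sum>i\<in>A. f i) = (\<Sum>i\<in>A. h (f i))"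
  by (induction A rule: infinite_finite_induct) (simp_all add: rhom_0 rhom_add)
lemma rhom_prod: "rhom h \<Longrightarrow> h (\<Prod>i\<in>A. f i) = (\<Prod>i\<in>A. h (f i))"
  by (induction A rule: infinite_finite_induct) (simp_all add: rhom_1 rhom_mult)

lemma map_poly_rhom_mult:
  assumes h: "rhom h"
  shows "map_poly h (p * q) = map_poly h p * map_poly h q"
proof (rule poly_eqI)
  fix n
  show "coeff (map_poly h (p * q)) n = coeff (map_poly h p * map_poly h q) n"
    by (simp add: coeff_map_poly rhom_0[OF h] coeff_mult rhom_sum[OF h] rhom_mult[OF h])
qed

lemma map_poly_rhom_prod:
  assumes h: "rhom h"
  shows "map_poly h (\<Prod>i\<in>A. f i) = (\<Prod>i\<in>A. map_poly h (f i))"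
proof (induction A rule: infinite_finite_induct)
  case (infinite A) then show ?case by (simp add: rhom_1[OF h] rhom_0[OF h] map_poly_pCons one_pCons)
next
  case empty then show ?case by (simp add: rhom_1[OF h] rhom_0[OF h] map_poly_pCons one_pCons)
next
  case (insert x F) then show ?case by (simp add: map_poly_rhom_mult[OF h])
qed

lemma map_poly_rhom_lin:
  assumes h: "rhom h"
  shows "map_poly h [:- a, 1:] = [:- h a, 1:]"
  by (simp add: map_poly_pCons rhom_0[OF h] rhom_1[OF h] rhom_uminus[OF h])

lemma der_poly:
  assumes D: "is_derivation D" and c: "\<And>k. D (coeff Q k) = 0"
  shows "D (poly Q a) = poly (pderiv Q) a * D a"
  using c
proof (induction Q rule: pCons_induct)
  case 0 then show ?case by (simp add: der_0[OF D])
next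
  case (pCons c Q)
  have c0: "D c = 0" using pCons.prems[of 0] by simp
  have cQ: "D (coeff Q k) = 0" for k using pCons.prems[of "Suc k"] by simp
  have IH: "D (poly Q a) = poly (pderiv Q) a * D a" using pCons.IH cQ by blast
  show ?case
    by (simp add: der_add[OF D] der_mult[OF D] c0 IH pderiv_pCons algebra_simps)
qed

lemma der_root:
  fixes a :: "'a::field"
  assumes D: "is_derivation D" and F: "is_subfield F" and DF: "\<And>y. y \<in> F \<Longrightarrow> D y = 0"
    and nat_nz: "\<And>n::nat. n > 0 \<Longrightarrow> (of_nat n :: 'a) \<noteq> 0"
  shows "Q \<noteq> 0 \<Longrightarrow> (\<forall>k. coeff Q k \<in> F) \<Longrightarrow> poly Q a = 0 \<Longrightarrow> D a = 0"
proof (induction "degree Q" arbitrary: Q rule: less_induct)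
  case less
  have dpos: "degree Q > 0"
  proof (rule ccontr)
    assume "\<not> degree Q > 0"
    then have "Q = [:coeff Q 0:]" by (metis degree_0_id gr0I)
    then have "poly Q a = coeff Q 0" by (metis poly_pCons mult_zero_right poly_0 add.right_neutral)
    with less.prems have "coeff Q 0 = 0" by simp
    with \<open>Q = [:coeff Q 0:]\<close> less.prems(1) show False by simp
  qed
  let ?Q' = "pderiv Q"
  have cQ': "coeff ?Q' k \<in> F" for k
    unfolding coeff_pderiv by (rule subfield_mult[OF F subfield_of_nat[OF F]]) (use less.prems(2) in blast)
  have "coeff ?Q' (degree Q - 1) = of_nat (degree Q) * lead_coeff Q"
    using dpos by (simp add: coeff_pderiv)
  moreover have "lead_coeff Q \<noteq> 0" using less.prems(1) by simp
  ultimately have Q'nz: "?Q' \<noteq> 0" using nat_nz[OF dpos] by (metis coeff_0 mult_eq_0_iff)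
  have "degree ?Q' \<le> degree Q - 1"
    by (rule degree_le) (auto simp: coeff_pderiv coeff_eq_0)
  then have dlt: "degree ?Q' < degree Q" using dpos by linarith
  show "D a = 0"
  proof (cases "poly ?Q' a = 0")
    case True
    show ?thesis by (rule less.hyps[OF dlt Q'nz]) (use cQ' True in auto)
  next
    case False
    have "0 = D (poly Q a)" using less.prems(3) der_0[OF D] by simp
    also have "\<dots> = poly ?Q' a * D a" by (rule der_poly[OF D]) (use less.prems(2) DF in auto)
    finally show ?thesis using False by simp
  qed
qed

lemma ratf_of_nat_nz: "n > 0 \<Longrightarrow> (of_nat n :: 'n::{finite,linorder} ratf) \<noteq> 0"
proof -
  assume n: "n > 0"
  have "(of_nat n :: 'n mpoly) = mp_const (of_nat n)" by (simp add: mp_const_of_nat)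
  moreover have "mp_const (of_nat n) \<noteq> (0 :: 'n mpoly)" using n mp_const_inj[of "of_nat n" 0] by simp
  ultimately have "(of_nat n :: 'n mpoly) \<noteq> 0" by simp
  then show ?thesis using to_ratf_of_nat[of n, where 'a='n] to_ratf_eq0 by metis
qed

lemma map_mat_nth[simp]: "map_mat f A $ i $ j = f (A $ i $ j)"
  by (simp add: map_mat_def)

lemma map_mat_mult_rhom:
  assumes h: "rhom h"
  shows "map_mat h (A ** B) = map_mat h A ** map_mat h B"
  by (simp add: vec_eq_iff matrix_matrix_mult_def rhom_sum[OF h] rhom_mult[OF h])

lemma map_mat_mat1_rhom:
  assumes h: "rhom h"
  shows "map_mat h (mat 1) = mat 1"
  by (simp add: vec_eq_iff mat_def rhom_0[OF h] rhom_1[OF h])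

lemma map_mat_der_mult:
  assumes D: "is_derivation D"
  shows "map_mat D (A ** B) = map_mat D A ** B + A ** map_mat D B"
  by (simp add: vec_eq_iff matrix_matrix_mult_def der_sum[OF D] der_mult[OF D] sum.distrib algebra_simps)

lemma map_mat_der_mat1:
  assumes D: "is_derivation D"
  shows "map_mat D (mat 1) = 0"
  by (simp add: vec_eq_iff mat_def der_0[OF D] der_1[OF D])

lemma map_mat_diff:
  assumes D: "is_derivation D"
  shows "map_mat D (A - B) = map_mat D A - map_mat D B"
  by (simp add: vec_eq_iff der_diff[OF D])

lemma mm_uminus_right: "(A::'a::ring_1^'n^'m) ** (- B) = - (A ** B)"
  by (simp add: vec_eq_iff matrix_matrix_mult_def sum_negf)
lemma mm_uminus_left: "(- A::'a::ring_1^'n^'m) ** B = - (A ** B)"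
  by (simp add: vec_eq_iff matrix_matrix_mult_def sum_negf)
lemma mm_add_left: "((A::'a::ring_1^'n^'m) + B) ** C = A ** C + B ** C"
  by (simp add: vec_eq_iff matrix_matrix_mult_def sum.distrib distrib_right)
lemma mm_diff_left: "((A::'a::ring_1^'n^'m) - B) ** C = A ** C - B ** C"
  by (simp add: vec_eq_iff matrix_matrix_mult_def sum_subtractf left_diff_distrib)
lemma mm_diff_right: "(A::'a::ring_1^'n^'m) ** (B - C) = A ** B - A ** C"
  by (simp add: vec_eq_iff matrix_matrix_mult_def sum_subtractf right_diff_distrib)

lemma matrix_inv_field:
  fixes A :: "'a::field^'n^'n"
  assumes "invertible A"
  shows "A ** matrix_inv A = mat 1" "matrix_inv A ** A = mat 1"
  using matrix_inv_props[OF assms] by auto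

lemma der_matrix_inv:
  fixes J :: "'a::field^'n^'n"
  assumes D: "is_derivation D" and J: "invertible J"
  shows "map_mat D (matrix_inv J) = - (matrix_inv J ** map_mat D J ** matrix_inv J)"
proof -
  let ?Ji = "matrix_inv J"
  have "0 = map_mat D (J ** ?Ji)" using map_mat_der_mat1[OF D] by (simp add: matrix_inv_field[OF J])
  also have "\<dots> = map_mat D J ** ?Ji + J ** map_mat D ?Ji" by (rule map_mat_der_mult[OF D])
  finally have e: "J ** map_mat D ?Ji = - (map_mat D J ** ?Ji)" by (simp add: eq_neg_iff_add_eq_0 add.commute)
  have "map_mat D ?Ji = ?Ji ** (J ** map_mat D ?Ji)"
    by (simp add: matrix_mul_assoc matrix_inv_field[OF J])
  also have "\<dots> = - (?Ji ** map_mat D J ** ?Ji)"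
    by (simp add: e matrix_mul_assoc mm_uminus_right)
  finally show ?thesis .
qed

lemma invertible_from_kernel:
  fixes A :: "'a::field^'n^'n"
  assumes "\<And>w. A *v w = 0 \<Longrightarrow> w = 0"
  shows "invertible A"
proof -
  have lin: "Vector_Spaces.linear (*s) (*s) ((*v) A)" by (rule matrix_vector_mul_linear_gen)
  have "inj ((*v) A)"
  proof (rule injI)
    fix x y assume "A *v x = A *v y"
    then have "A *v (x - y) = 0" by (simp add: matrix_vector_mult_diff_distrib)
    then show "x = y" using assms by (metis eq_iff_diff_eq_0)
  qed
  then have "det (matrix ((*v) A)) \<noteq> 0" using det_nz_iff_inj_gen[OF lin] by simp
  then show ?thesis by (simp add: invertible_det_nz)
qed

lemma det_in_subfield:
  fixes A :: "'a::field^'n^'n"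
  assumes F: "is_subfield F" and A: "\<And>i j. A $ i $ j \<in> F"
  shows "det A \<in> F"
  unfolding det_def
proof (rule subfield_sum[OF F], rule subfield_mult[OF F])
  fix p :: "'n \<Rightarrow> 'n"
  show "of_int (sign p) \<in> F"
    by (simp add: sign_def subfield_1[OF F] subfield_uminus[OF F])
  show "(\<Prod>i\<in>UNIV. A $ i $ p i) \<in> F" by (rule subfield_prod[OF F]) (simp add: A)
qed

definition Eop :: "'n::finite \<Rightarrow> 'n mpoly \<Rightarrow> 'n mpoly" where
  "Eop l f = mp_var l * mp_pderiv l f"

lemma ej_add_minus:
  assumes "Poly_Mapping.lookup m l > 0"
  shows "ej l + (m - ej l) = m"
  by (rule poly_mapping_eqI) (use assms in \<open>auto simp: lookup_add lookup_minus lookup_single when_def\<close>)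

lemma Eop_single: "mp_var l * Poly_Mapping.single (m - ej l) (of_nat (Poly_Mapping.lookup m l) * c)
   = Poly_Mapping.single m (of_nat (Poly_Mapping.lookup m l) * c)"
  using ej_add_minus[of m l] by (cases "Poly_Mapping.lookup m l > 0") (simp_all add: mp_var_def mult_single)

lemma lookup_Eop: "Poly_Mapping.lookup (Eop l f) m = of_nat (Poly_Mapping.lookup m l) * Poly_Mapping.lookup f m"
proof -
  have "Eop l f = (\<Sum>m'\<in>Poly_Mapping.keys f. Poly_Mapping.single m' (of_nat (Poly_Mapping.lookup m' l) * Poly_Mapping.lookup f m'))"
    unfolding Eop_def mp_pderiv_def sum_distrib_left Eop_single by (rule refl)
  then have "Poly_Mapping.lookup (Eop l f) m = (\<Sum>m'\<in>Poly_Mapping.keys f. (of_nat (Poly_Mapping.lookup m' l) * Poly_Mapping.lookup f m' when m' = m))"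
    by (simp add: lookup_sum lookup_single)
  also have "\<dots> = of_nat (Poly_Mapping.lookup m l) * Poly_Mapping.lookup f m"
    by (cases "m \<in> Poly_Mapping.keys f") (auto simp: when_def in_keys_iff)
  finally show ?thesis .
qed

lemma keys_Eop: "Poly_Mapping.keys (Eop l f) \<subseteq> Poly_Mapping.keys f"
  by (auto simp: in_keys_iff lookup_Eop)

lemma lookup_mult_top:
  fixes f g :: "'n::{finite,linorder} mpoly"
  assumes kf: "Poly_Mapping.keys f \<subseteq> {x. x \<le> a}" and kg: "Poly_Mapping.keys g \<subseteq> {y. y \<le> b}"
  shows "Poly_Mapping.lookup (f * g) (a + b) = Poly_Mapping.lookup f a * Poly_Mapping.lookup g b"
proof -
  let ?F = "Poly_Mapping.keys f" and ?G = "Poly_Mapping.keys g"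
  have f: "f = (\<Sum>x\<in>?F. Poly_Mapping.single x (Poly_Mapping.lookup f x))" by (rule poly_mapping_sum_single) auto
  have g: "g = (\<Sum>y\<in>?G. Poly_Mapping.single y (Poly_Mapping.lookup g y))" by (rule poly_mapping_sum_single) auto
  have "f * g = (\<Sum>x\<in>?F. \<Sum>y\<in>?G. Poly_Mapping.single (x + y) (Poly_Mapping.lookup f x * Poly_Mapping.lookup g y))"
    by (subst f, subst g) (simp add: sum_product mult_single)
  then have "Poly_Mapping.lookup (f * g) (a + b) = (\<Sum>x\<in>?F. \<Sum>y\<in>?G. (Poly_Mapping.lookup f x * Poly_Mapping.lookup g y when x + y = a + b))"
    by (simp add: lookup_sum lookup_single)
  also have "\<dots> = (\<Sum>x\<in>?F. \<Sum>y\<in>?G. (if x = a \<and> y = b then Poly_Mapping.lookup f x * Poly_Mapping.lookup g y else 0))"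
  proof (intro sum.cong refl)
    fix x y assume x: "x \<in> ?F" and y: "y \<in> ?G"
    have xa: "x \<le> a" and yb: "y \<le> b" using x y kf kg by auto
    have "x + y = a + b \<longleftrightarrow> x = a \<and> y = b"
    proof
      assume e: "x + y = a + b"
      show "x = a \<and> y = b"
      proof (rule ccontr)
        assume "\<not> (x = a \<and> y = b)"
        then have "x < a \<or> y < b" using xa yb by auto
        then have "x + y < a + b"
          using xa yb by (metis add_le_less_mono add_less_le_mono)
        then show False using e by simp
      qed
    qed simp
    then show "(Poly_Mapping.lookup f x * Poly_Mapping.lookup g y when x + y = a + b) =
      (if x = a \<and> y = b then Poly_Mapping.lookup f x * Poly_Mapping.lookup g y else 0)"
      by (simp add: when_def)
  qed
  also have "\<dots> = Poly_Mapping.lookup f a * Poly_Mapping.lookup g b"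
  proof -
    have "(\<Sum>x\<in>?F. \<Sum>y\<in>?G. (if x = a \<and> y = b then Poly_Mapping.lookup f x * Poly_Mapping.lookup g y else 0))
        = (\<Sum>x\<in>?F. if x = a then (\<Sum>y\<in>?G. if y = b then Poly_Mapping.lookup f x * Poly_Mapping.lookup g y else 0) else 0)"
      by (rule sum.cong) auto
    also have "\<dots> = (if a \<in> ?F then (if b \<in> ?G then Poly_Mapping.lookup f a * Poly_Mapping.lookup g b else 0) else 0)"
      by (simp add: sum.delta)
    also have "\<dots> = Poly_Mapping.lookup f a * Poly_Mapping.lookup g b"
      by (auto simp: in_keys_iff)
    finally show ?thesis .
  qed
  finally show ?thesis .
qed

definition lm :: "'n::{finite,linorder} mpoly \<Rightarrow> ('n \<Rightarrow>\<^sub>0 nat)" where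
  "lm f = Max (Poly_Mapping.keys f)"

lemma lm_in: "f \<noteq> 0 \<Longrightarrow> lm f \<in> Poly_Mapping.keys f"
  unfolding lm_def by (rule Max_in) auto

lemma lm_ge: "Poly_Mapping.keys f \<subseteq> {x. x \<le> lm f}"
  unfolding lm_def by auto

lemma lm_eq:
  fixes p q :: "'n::{finite,linorder} mpoly"
  assumes p: "p \<noteq> 0" and q: "q \<noteq> 0" and E: "\<And>l. q * Eop l p = p * Eop l q"
  shows "lm p = lm q"
proof (rule poly_mapping_eqI)
  fix l
  let ?a = "lm p" and ?b = "lm q"
  have kEp: "Poly_Mapping.keys (Eop l p) \<subseteq> {x. x \<le> ?a}" using keys_Eop lm_ge by blast
  have kEq: "Poly_Mapping.keys (Eop l q) \<subseteq> {x. x \<le> ?b}" using keys_Eop lm_ge by blast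
  have "Poly_Mapping.lookup (q * Eop l p) (?b + ?a) = Poly_Mapping.lookup q ?b * (of_nat (Poly_Mapping.lookup ?a l) * Poly_Mapping.lookup p ?a)"
    by (simp add: lookup_mult_top[OF lm_ge kEp] lookup_Eop)
  moreover have "Poly_Mapping.lookup (p * Eop l q) (?a + ?b) = Poly_Mapping.lookup p ?a * (of_nat (Poly_Mapping.lookup ?b l) * Poly_Mapping.lookup q ?b)"
    by (simp add: lookup_mult_top[OF lm_ge kEq] lookup_Eop)
  ultimately have "Poly_Mapping.lookup q ?b * Poly_Mapping.lookup p ?a * of_nat (Poly_Mapping.lookup ?a l)
      = Poly_Mapping.lookup q ?b * Poly_Mapping.lookup p ?a * of_nat (Poly_Mapping.lookup ?b l)"
    using E[of l] by (auto simp add: add.commute mult_ac)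
  moreover have "Poly_Mapping.lookup q ?b * Poly_Mapping.lookup p ?a \<noteq> 0"
    using lm_in[OF p] lm_in[OF q] by (simp add: in_keys_iff)
  ultimately have "(of_nat (Poly_Mapping.lookup ?a l) :: complex) = of_nat (Poly_Mapping.lookup ?b l)" by simp
  then show "Poly_Mapping.lookup ?a l = Poly_Mapping.lookup ?b l" by simp
qed

lemma lookup_const_mult: "Poly_Mapping.lookup (mp_const c * q) m = c * Poly_Mapping.lookup q m"
proof -
  have "mp_const c * q = Poly_Mapping.map ((*) c) q" by (simp add: mp_const_def mult_map_scale_conv_mult)
  then show ?thesis by (simp add: map.rep_eq when_def)
qed

lemma Eop_const_mult: "Eop l (mp_const c * q) = mp_const c * Eop l q"
  by (simp add: Eop_def pderiv_mult mult_ac)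

lemma Eop_diff: "Eop l (p - q) = Eop l p - Eop l q"
  by (simp add: Eop_def pderiv_diff right_diff_distrib)

lemma const_ratio:
  fixes p q :: "'n::{finite,linorder} mpoly"
  assumes q: "q \<noteq> 0" and E: "\<And>l. q * Eop l p = p * Eop l q"
  shows "\<exists>c. p = mp_const c * q"
proof (cases "p = 0")
  case True then show ?thesis by (intro exI[of _ 0]) simp
next
  case False
  have eq: "lm p = lm q" by (rule lm_eq[OF False q E])
  define c where "c = Poly_Mapping.lookup p (lm q) / Poly_Mapping.lookup q (lm q)"
  define r where "r = p - mp_const c * q"
  have qnz: "Poly_Mapping.lookup q (lm q) \<noteq> 0" using lm_in[OF q] by (simp add: in_keys_iff)
  have Er: "q * Eop l r = r * Eop l q" for l
    unfolding r_def Eop_diff Eop_const_mult using E[of l] by (simp add: algebra_simps)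
  have r0: "Poly_Mapping.lookup r (lm q) = 0"
    using qnz by (simp add: r_def lookup_minus lookup_const_mult c_def)
  have "r = 0"
  proof (rule ccontr)
    assume "r \<noteq> 0"
    then have "lm r = lm q" by (rule lm_eq[OF _ q Er])
    then have "lm q \<in> Poly_Mapping.keys r" using lm_in[OF \<open>r \<noteq> 0\<close>] by simp
    then show False using r0 by (simp add: in_keys_iff)
  qed
  then show ?thesis unfolding r_def by auto
qed

lemma dd_zero_Fract:
  assumes q: "q \<noteq> 0" and d: "dd l (Fract p q) = 0"
  shows "q * Eop l p = p * Eop l q"
proof -
  have "Fract (q * mp_pderiv l p - p * mp_pderiv l q) (q * q) = 0"
    using d q by (simp add: dd_def fder_Fract[OF rder_pderiv])
  then have "q * mp_pderiv l p - p * mp_pderiv l q = 0"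
    using q by (simp add: Zero_fract_def eq_fract)
  then show ?thesis by (simp add: Eop_def algebra_simps)
qed

lemma const_of_dd:
  fixes x :: "'n::{finite,linorder} ratf"
  assumes "\<And>l. dd l x = 0"
  shows "\<exists>c. x = Cst c"
proof -
  obtain p q where x: "x = Fract p q" "q \<noteq> 0" by (cases x)
  have "\<And>l. q * Eop l p = p * Eop l q" using dd_zero_Fract[OF x(2)] assms x(1) by blast
  then obtain c where "p = mp_const c * q" using const_ratio[OF x(2)] by blast
  then have "x = Fract (q * mp_const c) (q * 1)" using x by (simp add: mult.commute)
  also have "\<dots> = Cst c" unfolding to_ratf_def by (rule mult_fract_cancel[OF x(2)])
  finally have "x = Cst c" .
  then show ?thesis by blast
qed

lemma euler:
  fixes f :: "'n::{finite,linorder} mpoly"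
  assumes h: "\<And>m. m \<in> Poly_Mapping.keys f \<Longrightarrow> (\<Sum>i\<in>UNIV. Poly_Mapping.lookup m i) = d"
  shows "(\<Sum>l\<in>UNIV. Eop l f) = of_nat d * f"
proof (rule poly_mapping_eqI)
  fix m
  have "Poly_Mapping.lookup (\<Sum>l\<in>UNIV. Eop l f) m = (\<Sum>l\<in>UNIV. of_nat (Poly_Mapping.lookup m l)) * Poly_Mapping.lookup f m"
    by (simp add: lookup_sum lookup_Eop sum_distrib_right)
  also have "\<dots> = of_nat d * Poly_Mapping.lookup f m"
    using h[of m] by (cases "m \<in> Poly_Mapping.keys f") (auto simp: in_keys_iff)
  also have "\<dots> = Poly_Mapping.lookup (of_nat d * f) m"
    using lookup_const_mult[of "of_nat d" f m] by (simp add: mp_const_of_nat)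
  finally show "Poly_Mapping.lookup (\<Sum>l\<in>UNIV. Eop l f) m = Poly_Mapping.lookup (of_nat d * f) m" .
qed

lemma pderiv_lvar: "mp_pderiv l (lvar B i) = mp_const (B $ i $ l)"
proof -
  have "mp_pderiv l (lvar B i) = (\<Sum>k\<in>UNIV. if k = l then mp_const (B $ i $ k) else 0)"
    unfolding lvar_def pderiv_sum_gen
    by (rule sum.cong) (auto simp: pderiv_mult pderiv_var)
  then show ?thesis by simp
qed

lemma pderiv_subm:
  "mp_pderiv l (subm B f) = (\<Sum>m\<in>UNIV. subm B (mp_pderiv m f) * mp_const (B $ m $ l))"
proof (induction f rule: mpoly_induct)
  case (const c) then show ?case by (simp add: subm_def)
next
  case (var i)
  have "(\<Sum>m\<in>UNIV. subm B (mp_pderiv m (mp_var i)) * mp_const (B $ m $ l))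
      = (\<Sum>m\<in>UNIV. if m = i then mp_const (B $ m $ l) else 0)"
    by (rule sum.cong) (auto simp: pderiv_var subm_def)
  then show ?case by (simp add: subm_def pderiv_lvar[unfolded subm_def])
next
  case (add p q) then show ?case
    by (simp add: subm_def mp_subst_add pderiv_add sum.distrib distrib_right)
next
  case (mult p q)
  have "mp_pderiv l (subm B (p * q)) = subm B p * mp_pderiv l (subm B q) + subm B q * mp_pderiv l (subm B p)"
    by (simp add: subm_def mp_subst_mult pderiv_mult)
  also have "\<dots> = subm B p * (\<Sum>m\<in>UNIV. subm B (mp_pderiv m q) * mp_const (B $ m $ l))
       + subm B q * (\<Sum>m\<in>UNIV. subm B (mp_pderiv m p) * mp_const (B $ m $ l))"
    using mult by simp
  also have "\<dots> = (\<Sum>m\<in>UNIV. (subm B p * subm B (mp_pderiv m q) + subm B q * subm B (mp_pderiv m p)) * mp_const (B $ m $ l))"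
    by (simp add: sum_distrib_left sum.distrib[symmetric] algebra_simps)
  also have "\<dots> = (\<Sum>m\<in>UNIV. subm B (mp_pderiv m (p * q)) * mp_const (B $ m $ l))"
    by (simp add: subm_def mp_subst_add mp_subst_mult pderiv_mult)
  finally show ?case .
qed

lemma rhom_Cst: "rhom (\<lambda>c. Cst c :: 'n::{finite,linorder} ratf)"
  by (simp add: rhom_def mp_const_add mp_const_mult to_ratf_add to_ratf_mult)

locale main = crg G for G :: "((complex, 'n::{finite,linorder}) vec, 'n) vec set" +
  fixes \<phi> :: "'n \<Rightarrow> 'n mpoly"
  assumes fi: "fundamental_invariants G \<phi>"
begin

abbreviation K where "K \<equiv> Kfield \<phi>"
abbreviation Phi where "Phi k \<equiv> to_ratf (\<phi> k)"
abbreviation J where "J \<equiv> jacobian \<phi>"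

lemma fi_all: "(\<forall>i. mp_homogeneous (\<phi> i)) \<and> (\<forall>f::'n mpoly. mp_subst \<phi> f = 0 \<longrightarrow> f = 0) \<and>
     (\<forall>i. \<phi> i \<in> invariant_ring G) \<and> invariant_ring G = range (\<lambda>f. mp_subst \<phi> f)"
  using fi unfolding fundamental_invariants_def .
lemma fi_hom: "mp_homogeneous (\<phi> i)" using conjunct1[OF fi_all] by blast
lemma fi_inv: "\<phi> i \<in> invariant_ring G" using conjunct1[OF conjunct2[OF conjunct2[OF fi_all]]] by blast
lemma fi_range: "invariant_ring G = range (\<lambda>f. mp_subst \<phi> f)" by (rule conjunct2[OF conjunct2[OF conjunct2[OF fi_all]]])

lemma phi_inv: "M \<in> G \<Longrightarrow> gamma M (\<phi> k) = \<phi> k"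
  using fi_inv[of k] unfolding invariant_ring_def by blast

lemma inv_range: "(\<And>M. M \<in> G \<Longrightarrow> gamma M P = P) \<Longrightarrow> \<exists>a. P = mp_subst \<phi> a"
proof -
  assume "\<And>M. M \<in> G \<Longrightarrow> gamma M P = P"
  then have "P \<in> invariant_ring G" by (simp add: invariant_ring_def)
  then have "P \<in> range (\<lambda>f. mp_subst \<phi> f)" by (simp only: fi_range)
  then show ?thesis by blast
qed

lemma homog: "\<exists>d. \<forall>m\<in>Poly_Mapping.keys (\<phi> k). (\<Sum>i\<in>UNIV. Poly_Mapping.lookup m i) = d"
  using fi_hom[of k] unfolding mp_homogeneous_def .

lemma K_sub: "is_subfield K"
  unfolding Kfield_def by (rule gen_field_subfield)

lemma Cst_K: "Cst c \<in> K"
  unfolding Kfield_def by (rule subsetD[OF gen_field_sup]) auto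

lemma Phi_K: "Phi k \<in> K"
  unfolding Kfield_def by (rule subsetD[OF gen_field_sup]) auto

lemma subst_K: "to_ratf (mp_subst \<phi> a) \<in> K"
proof (induction a rule: mpoly_induct)
  case (const c) then show ?case by (simp add: Cst_K)
next
  case (var i) then show ?case by (simp add: Phi_K)
next
  case (add p q) then show ?case by (simp add: mp_subst_add to_ratf_add subfield_add[OF K_sub])
next
  case (mult p q) then show ?case by (simp add: mp_subst_mult to_ratf_mult subfield_mult[OF K_sub])
qed

lemma INV:
  assumes inv: "\<And>M. M \<in> G \<Longrightarrow> sgm M x = x"
  shows "x \<in> K"
proof -
  obtain p q where x: "x = Fract p q" "q \<noteq> 0" by (cases x)
  define Nq where "Nq = (\<Prod>M\<in>G. gamma M q)"
  define R where "R = (\<Prod>M\<in>G - {mat 1}. gamma M q)"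
  have NqR: "Nq = q * R"
    unfolding Nq_def R_def by (subst prod.remove[OF finG oneG]) simp
  have Nq_inv: "gamma N Nq = Nq" if N: "N \<in> G" for N
  proof -
    have "gamma N Nq = (\<Prod>M\<in>G. gamma N (gamma M q))"
      unfolding Nq_def by (rule rhom_prod[OF rhom_gamma])
    also have "\<dots> = (\<Prod>M\<in>G. gamma (N ** M) q)"
      by (rule prod.cong) (auto simp: gamma_comp invG N)
    also have "\<dots> = Nq" unfolding Nq_def by (rule prod.reindex_bij_betw[OF bij_left[OF N]])
    finally show ?thesis .
  qed
  have Nq0: "Nq \<noteq> 0"
    unfolding Nq_def using finG gamma_inj invG x(2) by (auto simp: prod_zero_iff)
  have xN: "x * to_ratf Nq = to_ratf (p * R)"
  proof -
    have "x * to_ratf Nq = Fract (q * (p * R)) (q * 1)"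
      using x by (simp add: to_ratf_def NqR mult_fract mult_ac)
    also have "\<dots> = to_ratf (p * R)" unfolding to_ratf_def by (rule mult_fract_cancel[OF x(2)])
    finally show ?thesis .
  qed
  have PR_inv: "gamma N (p * R) = p * R" if N: "N \<in> G" for N
  proof -
    have "to_ratf (gamma N (p * R)) = sgm N (to_ratf (p * R))"
      by (rule sgm_to_ratf[OF invG[OF N], symmetric])
    also have "\<dots> = sgm N x * sgm N (to_ratf Nq)"
      by (simp add: xN[symmetric] sgm_mult[OF invG[OF N]])
    also have "\<dots> = x * to_ratf Nq"
      by (simp add: inv N sgm_to_ratf[OF invG[OF N]] Nq_inv)
    finally show ?thesis using xN by (simp add: to_ratf_inj)
  qed
  obtain a where a: "p * R = mp_subst \<phi> a" using inv_range PR_inv by blast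
  obtain b where b: "Nq = mp_subst \<phi> b" using inv_range Nq_inv by blast
  have "x = to_ratf (p * R) / to_ratf Nq"
    using xN Nq0 by (simp add: to_ratf_eq0 field_simps)
  then show ?thesis using a b subst_K subfield_divide[OF K_sub] by simp
qed

lemma KILL:
  assumes D: "is_derivation D" and C: "\<And>c. D (Cst c) = 0" and P: "\<And>k. D (Phi k) = 0"
  shows "D y = 0"
proof -
  have KD: "K \<subseteq> {y. D y = 0}"
    unfolding Kfield_def
    by (rule gen_field_least[OF der_kernel_subfield[OF D]]) (auto simp: C P)
  have "D (Xv j) = 0" for j
  proof -
    define Q where "Q = (\<Prod>M\<in>G. [:- sgm M (Xv j), 1:])"
    have Q0: "Q \<noteq> 0" unfolding Q_def using finG by (auto simp: prod_zero_iff)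
    have root: "poly Q (Xv j) = 0"
      unfolding Q_def poly_prod using finG oneG
      by (auto simp: prod_zero_iff sgm_mat1 intro!: bexI[of _ "mat 1"])
    have coeffK: "coeff Q k \<in> K" for k
    proof (rule INV)
      fix N assume N: "N \<in> G"
      have "map_poly (sgm N) Q = (\<Prod>M\<in>G. [:- sgm N (sgm M (Xv j)), 1:])"
        unfolding Q_def map_poly_rhom_prod[OF rhom_sgm[OF invG[OF N]]]
        by (simp add: map_poly_rhom_lin[OF rhom_sgm[OF invG[OF N]]])
      also have "\<dots> = (\<Prod>M\<in>G. [:- sgm (N ** M) (Xv j), 1:])"
        by (rule prod.cong) (auto simp: sgm_comp invG N)
      also have "\<dots> = Q" unfolding Q_def by (rule prod.reindex_bij_betw[OF bij_left[OF N]])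
      finally have "map_poly (sgm N) Q = Q" .
      then have "coeff (map_poly (sgm N) Q) k = coeff Q k" by simp
      then show "sgm N (coeff Q k) = coeff Q k"
        by (simp add: coeff_map_poly sgm_0[OF invG[OF N]])
    qed
    show ?thesis
      by (rule der_root[OF D K_sub _ ratf_of_nat_nz Q0 _ root]) (use KD coeffK in auto)
  qed
  then show ?thesis by (rule der_zero[OF D C])
qed

lemma UNIQ:
  assumes D1: "is_derivation D1" and D2: "is_derivation D2"
    and C1: "\<And>c. D1 (Cst c) = 0" and C2: "\<And>c. D2 (Cst c) = 0"
    and P: "\<And>k. D1 (Phi k) = D2 (Phi k)"
  shows "D1 y = D2 y"
  using KILL[OF der_diff_fun[OF D1 D2], of y] C1 C2 P by simp

lemma J_entry: "J $ k $ l = dd l (Phi k)"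
  by (simp add: jacobian_def dd_to_ratf)

lemma J_kernel:
  assumes w: "J *v w = 0"
  shows "w = 0"
proof -
  let ?D = "\<lambda>y. \<Sum>l\<in>UNIV. dd l y * w $ l"
  have D: "is_derivation ?D" by (rule der_lincomb[OF dd_derivation])
  have "?D (Phi k) = (J *v w) $ k" for k
    by (simp add: matrix_vector_mult_def J_entry)
  then have Pk: "?D (Phi k) = 0" for k using w by simp
  have z: "?D y = 0" for y by (rule KILL[OF D]) (simp_all add: dd_Cst Pk)
  have "w $ j = 0" for j
  proof -
    have "?D (Xv j) = (\<Sum>l\<in>UNIV. if l = j then w $ l else 0)"
      by (rule sum.cong) (auto simp: dd_Xv)
    then show ?thesis using z[of "Xv j"] by simp
  qed
  then show ?thesis by (simp add: vec_eq_iff)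
qed

lemma J_invertible: "invertible J"
  by (rule invertible_from_kernel) (rule J_kernel)

abbreviation Ji where "Ji \<equiv> matrix_inv J"

definition Dl :: "'n \<Rightarrow> 'n ratf \<Rightarrow> 'n ratf" where
  "Dl i y = (\<Sum>l\<in>UNIV. dd l y * Ji $ l $ i)"

lemma Dl_der: "is_derivation (Dl i)"
  unfolding Dl_def[abs_def] by (rule der_lincomb[OF dd_derivation])

lemma Dl_Cst: "Dl i (Cst c) = 0"
  by (simp add: Dl_def dd_Cst)

lemma Dl_Phi: "Dl i (Phi k) = (if k = i then 1 else 0)"
proof -
  have "Dl i (Phi k) = (J ** Ji) $ k $ i"
    by (simp add: Dl_def matrix_matrix_mult_def J_entry)
  also have "\<dots> = (if k = i then 1 else 0)"
    by (simp add: matrix_inv_field[OF J_invertible] mat_def)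
  finally show ?thesis .
qed

lemma delta_eq: "delta \<phi> i = Dl i"
  unfolding delta_def
proof (rule the_equality)
  show "is_derivation (Dl i) \<and> (\<forall>c. Dl i (Cst c) = 0) \<and> (\<forall>j. Dl i (Phi j) = (if j = i then 1 else 0))"
    by (simp add: Dl_der Dl_Cst Dl_Phi)
next
  fix D assume D: "is_derivation D \<and> (\<forall>c. D (Cst c) = 0) \<and> (\<forall>j. D (Phi j) = (if j = i then 1 else 0))"
  show "D = Dl i"
  proof
    fix y show "D y = Dl i y"
      by (rule UNIQ) (use D in \<open>simp_all add: Dl_der Dl_Cst Dl_Phi\<close>)
  qed
qed

lemma delta_der: "is_derivation (delta \<phi> i)" by (simp add: delta_eq Dl_der)
lemma delta_Cst: "delta \<phi> i (Cst c) = 0" by (simp add: delta_eq Dl_Cst)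
lemma delta_Phi: "delta \<phi> i (Phi k) = (if k = i then 1 else 0)" by (simp add: delta_eq Dl_Phi)

lemma delta_comm: "delta \<phi> i (delta \<phi> j y) = delta \<phi> j (delta \<phi> i y)"
proof -
  have "delta \<phi> i (delta \<phi> j y) - delta \<phi> j (delta \<phi> i y) = 0"
  proof (rule KILL[where D = "\<lambda>x. delta \<phi> i (delta \<phi> j x) - delta \<phi> j (delta \<phi> i x)"])
    show "is_derivation (\<lambda>x. delta \<phi> i (delta \<phi> j x) - delta \<phi> j (delta \<phi> i x))"
      by (rule der_commutator[OF delta_der delta_der])
  next
    fix c show "delta \<phi> i (delta \<phi> j (Cst c)) - delta \<phi> j (delta \<phi> i (Cst c)) = 0"
      by (simp add: delta_Cst der_0[OF delta_der])
  next
    fix k show "delta \<phi> i (delta \<phi> j (Phi k)) - delta \<phi> j (delta \<phi> i (Phi k)) = 0"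
      by (simp add: delta_Phi der_0[OF delta_der] der_1[OF delta_der])
  qed
  then show ?thesis by simp
qed

end

context main
begin

abbreviation dJ where "dJ i \<equiv> map_mat (delta \<phi> i) J"
abbreviation CM where "CM X \<equiv> map_mat (\<lambda>c. Cst c) X"

lemma A_eq: "Amat \<phi> i = dJ i ** Ji"
  by (simp add: Amat_def)

lemma part2:
  "map_mat (delta \<phi> i) (Amat \<phi> j) - map_mat (delta \<phi> j) (Amat \<phi> i)
     = Amat \<phi> i ** Amat \<phi> j - Amat \<phi> j ** Amat \<phi> i"
proof -
  have dA: "map_mat (delta \<phi> a) (Amat \<phi> b) = map_mat (delta \<phi> a) (dJ b) ** Ji - dJ b ** (Ji ** dJ a ** Ji)" for a b
    unfolding A_eq map_mat_der_mult[OF delta_der] der_matrix_inv[OF delta_der J_invertible]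
    by (simp add: mm_uminus_right)
  have comm: "map_mat (delta \<phi> i) (dJ j) = map_mat (delta \<phi> j) (dJ i)"
    by (simp add: vec_eq_iff delta_comm)
  have "map_mat (delta \<phi> i) (Amat \<phi> j) - map_mat (delta \<phi> j) (Amat \<phi> i)
     = (map_mat (delta \<phi> i) (dJ j) ** Ji - dJ j ** (Ji ** dJ i ** Ji))
       - (map_mat (delta \<phi> j) (dJ i) ** Ji - dJ i ** (Ji ** dJ j ** Ji))"
    by (simp only: dA)
  also have "\<dots> = dJ i ** (Ji ** dJ j ** Ji) - dJ j ** (Ji ** dJ i ** Ji)"
    by (simp add: comm algebra_simps)
  also have "\<dots> = Amat \<phi> i ** Amat \<phi> j - Amat \<phi> j ** Amat \<phi> i"
    by (simp add: A_eq matrix_mul_assoc)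
  finally show ?thesis .
qed

lemma sgm_delta:
  assumes M: "M \<in> G"
  shows "sgm M (delta \<phi> i y) = delta \<phi> i (sgm M y)"
proof -
  obtain P where P: "P \<in> G" "M ** P = mat 1" using exists_inv[OF M] by blast
  have PM: "P ** M = mat 1" using P(2) matrix_left_right_inverse by blast
  have iM: "invertible M" and iP: "invertible P" using invG M P by auto
  have bk1: "\<And>z. sgm P (sgm M z) = z" using sgm_comp[OF iP iM] PM sgm_mat1 by simp
  have bk2: "\<And>z. sgm M (sgm P z) = z" using sgm_comp[OF iM iP] P(2) sgm_mat1 by simp
  let ?D = "\<lambda>z. sgm P (delta \<phi> i (sgm M z))"
  have D: "is_derivation ?D"
    unfolding is_derivation_def
    by (simp add: sgm_add[OF iM] sgm_mult[OF iM] der_add[OF delta_der] der_mult[OF delta_der]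
        sgm_add[OF iP] sgm_mult[OF iP] bk1)
  have "?D y = delta \<phi> i y"
    by (rule UNIQ[OF D delta_der])
      (simp_all add: sgm_Cst[OF iM] delta_Cst sgm_0[OF iP] sgm_1[OF iP] sgm_to_ratf[OF iM] phi_inv[OF M] delta_Phi gamma_subm[of M "mp_const _"])
  then have "sgm M (delta \<phi> i y) = sgm M (?D y)" by simp
  also have "\<dots> = delta \<phi> i (sgm M y)" by (rule bk2)
  finally show ?thesis .
qed

lemma J_sgm:
  assumes M: "M \<in> G"
  shows "J = map_mat (sgm M) J ** CM (matrix_inv M)"
proof -
  have iM: "invertible M" using invG M by auto
  have "J $ k $ l = (map_mat (sgm M) J ** CM (matrix_inv M)) $ k $ l" for k l
  proof -
    have "J $ k $ l = to_ratf (mp_pderiv l (gamma M (\<phi> k)))" by (simp add: jacobian_def phi_inv[OF M])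
    also have "\<dots> = to_ratf (\<Sum>m\<in>UNIV. subm (matrix_inv M) (mp_pderiv m (\<phi> k)) * mp_const (matrix_inv M $ m $ l))"
      by (simp add: gamma_subm pderiv_subm)
    also have "\<dots> = (\<Sum>m\<in>UNIV. sgm M (J $ k $ m) * Cst (matrix_inv M $ m $ l))"
      by (simp add: to_ratf_sum to_ratf_mult sgm_to_ratf[OF iM] gamma_subm jacobian_def)
    also have "\<dots> = (map_mat (sgm M) J ** CM (matrix_inv M)) $ k $ l"
      by (simp add: matrix_matrix_mult_def)
    finally show ?thesis .
  qed
  then show ?thesis by (simp add: vec_eq_iff)
qed

lemma A_inv:
  assumes M: "M \<in> G"
  shows "map_mat (sgm M) (Amat \<phi> i) = Amat \<phi> i"
proof -
  have iM: "invertible M" using invG M by auto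
  let ?sJ = "map_mat (sgm M) J" and ?CB = "CM (matrix_inv M)" and ?CMM = "CM M"
  have CBM: "?CB ** ?CMM = mat 1"
    by (simp add: map_mat_mult_rhom[OF rhom_Cst, symmetric] matrix_inv_props[OF iM] map_mat_mat1_rhom[OF rhom_Cst])
  have CMB: "?CMM ** ?CB = mat 1"
    by (simp add: map_mat_mult_rhom[OF rhom_Cst, symmetric] matrix_inv_props[OF iM] map_mat_mat1_rhom[OF rhom_Cst])
  have iC: "invertible ?CMM" unfolding invertible_def using CBM CMB by blast
  have invC: "matrix_inv ?CMM = ?CB" by (rule matrix_inv_unique[OF iC CMB])
  have sJ: "?sJ = J ** ?CMM"
  proof -
    have "?sJ = ?sJ ** (?CB ** ?CMM)" by (simp add: CBM)
    also have "\<dots> = (?sJ ** ?CB) ** ?CMM" by (simp add: matrix_mul_assoc)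
    also have "\<dots> = J ** ?CMM" using J_sgm[OF M] by simp
    finally show ?thesis .
  qed
  have dC: "map_mat (delta \<phi> i) ?CMM = 0" by (simp add: vec_eq_iff delta_Cst)
  have dsJ: "map_mat (sgm M) (dJ i) = dJ i ** ?CMM"
  proof -
    have "map_mat (sgm M) (dJ i) = map_mat (delta \<phi> i) ?sJ" by (simp add: vec_eq_iff sgm_delta[OF M])
    also have "\<dots> = dJ i ** ?CMM" unfolding sJ map_mat_der_mult[OF delta_der] dC by simp
    finally show ?thesis .
  qed
  have sJ1: "?sJ ** map_mat (sgm M) Ji = mat 1"
    by (simp add: map_mat_mult_rhom[OF rhom_sgm[OF iM], symmetric] matrix_inv_field[OF J_invertible]
        map_mat_mat1_rhom[OF rhom_sgm[OF iM]])
  have isJ: "invertible ?sJ" using sJ1 invertible_right_inverse by blast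
  have sJi: "map_mat (sgm M) Ji = ?CB ** Ji"
  proof -
    have "map_mat (sgm M) Ji = matrix_inv ?sJ" by (rule matrix_inv_unique[OF isJ sJ1, symmetric])
    also have "\<dots> = matrix_inv ?CMM ** Ji" unfolding sJ by (rule matrix_inv_mult[OF J_invertible iC])
    finally show ?thesis by (simp add: invC)
  qed
  have "map_mat (sgm M) (Amat \<phi> i) = dJ i ** ?CMM ** (?CB ** Ji)"
    unfolding A_eq map_mat_mult_rhom[OF rhom_sgm[OF iM]] dsJ sJi ..
  also have "\<dots> = dJ i ** (?CMM ** ?CB) ** Ji" by (simp add: matrix_mul_assoc)
  also have "\<dots> = Amat \<phi> i" by (simp add: CMB A_eq)
  finally show ?thesis .
qed

lemma part1: "Amat \<phi> i $ r $ s \<in> K"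
proof (rule INV)
  fix M assume M: "M \<in> G"
  have "map_mat (sgm M) (Amat \<phi> i) $ r $ s = Amat \<phi> i $ r $ s" by (simp only: A_inv[OF M])
  then show "sgm M (Amat \<phi> i $ r $ s) = Amat \<phi> i $ r $ s" by simp
qed

lemma const_in_K:
  assumes c: "\<And>i. delta \<phi> i x = 0"
  shows "x \<in> K"
proof -
  have "dd l x = (\<Sum>k\<in>UNIV. delta \<phi> k x * dd l (Phi k))" for l
  proof (rule UNIQ[OF dd_derivation der_lincomb[OF delta_der]])
    fix c show "dd l (Cst c) = 0" by (rule dd_Cst)
  next
    fix c show "(\<Sum>k\<in>UNIV. delta \<phi> k (Cst c) * dd l (Phi k)) = 0" by (simp add: delta_Cst)
  next
    fix m
    have "(\<Sum>k\<in>UNIV. delta \<phi> k (Phi m) * dd l (Phi k)) = (\<Sum>k\<in>UNIV. if k = m then dd l (Phi k) else 0)"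
      by (rule sum.cong) (auto simp: delta_Phi)
    then show "dd l (Phi m) = (\<Sum>k\<in>UNIV. delta \<phi> k (Phi m) * dd l (Phi k))" by simp
  qed
  then have "dd l x = 0" for l using c by simp
  then obtain a where "x = Cst a" using const_of_dd by blast
  then show ?thesis using Cst_K by simp
qed

lemma gen_all: "gen_field (K \<union> {J $ r $ s | r s. True}) = UNIV"
proof -
  define F where "F = gen_field (K \<union> {J $ r $ s | r s. True})"
  have Fs: "is_subfield F" unfolding F_def by (rule gen_field_subfield)
  have KF: "K \<subseteq> F" unfolding F_def by (rule order_trans[OF _ gen_field_sup]) (rule Un_upper1)
  have JF: "J $ r $ s \<in> F" for r s unfolding F_def by (rule subsetD[OF gen_field_sup]) blast
  define dk where "dk k = (SOME d. \<forall>m\<in>Poly_Mapping.keys (\<phi> k). (\<Sum>i\<in>UNIV. Poly_Mapping.lookup m i) = d)" for k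
  have dk: "\<forall>m\<in>Poly_Mapping.keys (\<phi> k). (\<Sum>i\<in>UNIV. Poly_Mapping.lookup m i) = dk k" for k
    unfolding dk_def by (rule someI_ex[OF homog])
  define X :: "('n ratf, 'n) vec" where "X = (\<chi> l. Xv l)"
  define b :: "('n ratf, 'n) vec" where "b = (\<chi> k. of_nat (dk k) * Phi k)"
  have JX: "J *v X = b"
  proof -
    have "(J *v X) $ k = b $ k" for k
    proof -
      have "(J *v X) $ k = to_ratf (\<Sum>l\<in>UNIV. Eop l (\<phi> k))"
        by (simp add: matrix_vector_mult_def X_def jacobian_def to_ratf_sum to_ratf_mult Eop_def mult.commute)
      also have "\<dots> = b $ k"
        by (simp add: euler[OF dk[rule_format]] b_def to_ratf_mult to_ratf_of_nat)
      finally show ?thesis .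
    qed
    then show ?thesis by (simp add: vec_eq_iff)
  qed
  have dJ0: "det J \<noteq> 0" using J_invertible invertible_det_nz by blast
  have Xc: "X = (\<chi> k. det (\<chi> i j. if j = k then b $ i else J $ i $ j) / det J)"
    using cramer[OF dJ0] JX by blast
  have bF: "b $ i \<in> F" for i
    unfolding b_def using KF Phi_K subfield_mult[OF Fs subfield_of_nat[OF Fs]] by auto
  have XF: "Xv l \<in> F" for l
  proof -
    have "Xv l = X $ l" by (simp add: X_def)
    also have "\<dots> = det (\<chi> i j. if j = l then b $ i else J $ i $ j) / det J" by (subst Xc) simp
    finally have e: "Xv l = det (\<chi> i j. if j = l then b $ i else J $ i $ j) / det J" .
    show ?thesis unfolding e
      by (intro subfield_divide[OF Fs] det_in_subfield[OF Fs]) (auto simp: bF JF)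
  qed
  have polyF: "to_ratf p \<in> F" for p
  proof (induction p rule: mpoly_induct)
    case (const c) then show ?case using KF Cst_K by auto
  next
    case (var i) then show ?case by (rule XF)
  next
    case (add p q) then show ?case by (simp add: to_ratf_add subfield_add[OF Fs])
  next
    case (mult p q) then show ?case by (simp add: to_ratf_mult subfield_mult[OF Fs])
  qed
  have "x \<in> F" for x
  proof -
    obtain p q where x: "x = Fract p q" "q \<noteq> 0" by (cases x)
    then show ?thesis using polyF subfield_divide[OF Fs] by (simp add: Fract_to_ratf)
  qed
  then show ?thesis unfolding F_def by blast
qed

lemma part3: "picard_vessiot K (delta \<phi>) (Amat \<phi>)"
  unfolding picard_vessiot_def
proof (intro conjI exI[of _ J])
  show "{c. \<forall>i. delta \<phi> i c = 0} = {c \<in> K. \<forall>i. delta \<phi> i c = 0}"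
    using const_in_K by blast
  show "invertible J" by (rule J_invertible)
  show "\<forall>i. map_mat (delta \<phi> i) J = Amat \<phi> i ** J"
    by (simp add: A_eq matrix_mul_assoc[symmetric] matrix_inv_field[OF J_invertible])
  show "gen_field (K \<union> {J $ r $ s |r s. True}) = UNIV" by (rule gen_all)
qed

end

theorem theorem4p1:
  fixes G :: "((complex, 'n::{finite,linorder}) vec, 'n) vec set"
    and \<phi> :: "'n \<Rightarrow> 'n mpoly"
  assumes "complex_reflection_group G"
    and "fundamental_invariants G \<phi>"
  shows "(\<forall>i r s. Amat \<phi> i $ r $ s \<in> Kfield \<phi>)
    \<and> (\<forall>i j. map_mat (delta \<phi> i) (Amat \<phi> j) - map_mat (delta \<phi> j) (Amat \<phi> i)
             = Amat \<phi> i ** Amat \<phi> j - Amat \<phi> j ** Amat \<phi> i)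
    \<and> picard_vessiot (Kfield \<phi>) (delta \<phi>) (Amat \<phi>)"
proof -
  interpret m: main G \<phi>
    by (intro main.intro crg.intro main_axioms.intro assms)
  show ?thesis using m.part1 m.part2 m.part3 by blast
qed

end
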